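(* Let $\mathcal{H}$ be a separable Hilbert space with inner product $\langle\cdot,\cdot\rangle$ and norm $\|\cdot\|$, let $X\subset\mathcal{H}$ be closed and convex, and let $\Lambda,\Sigma>0$. Let $v:X\to\mathcal{H}$ and $R:X\to\mathbb{R}$ be bounded Borel measurable functions and let $\mathcal{N}$ be a neighbourhood of $0$ such that for all $h\in\mathcal{N}$, $x\in X$: $x+hv(x)\in X$ and $1+hR(x)>0$. Given $\nu_0\in\mathcal{M}(X)$, define $\nu_h\in\mathcal{M}(X)$ for $h\in\mathcal{N}$ by $\int_X\phi\,d\nu_h=\int_X\phi(x+hv(x))(1+hR(x))^2\,d\nu_0(x)$ for all $\phi\in C_b(X)$. Let $\mu\in\mathcal{M}(X)$ and let $\beta_{0,\star}\in\mathcal{M}(\mathfrak{C}\times\mathfrak{C})$ be optimal in the cone formulation of $\mathrm{HK}_{\Lambda,\Sigma}(\nu_0,\mu)^2$, with first marginal $\alpha_0\in\mathcal{M}_2(\mathfrak{C})$, $\mathfrak{h}\alpha_0\le\nu_0$, and second marginal $\alpha_\star\in\mathcal{M}_2(\mathfrak{C})$, $\mathfrak{h}\alpha_\star\le\mu$. Then the Fréchet subdifferential of $h\mapsto-\frac12\mathrm{HK}_{\Lambda,\Sigma}(\nu_h,\mu)^2$ at $h=0$ is nonempty and contains $$\mathfrak{F}_{0,\star,v,R}-\frac4\Sigma\int_X R(x)\,d(\nu_0-\mathfrak{h}\alpha_0)(x),$$ where $$\mathfrak{F}_{0,\star,v,R}=\frac4\Sigma\int_{\mathfrak{C}\times\mathfrak{C}}\Big[-r_1^2R(x_1)+r_1r_2R(x_1)\cos\big(\sqrt{\Sigma/(4\Lambda)}\|x_1-x_2\|\big)+r_1r_2\sqrt{\Sigma/(4\Lambda)}\,\langle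 S_{\Lambda,\Sigma}(x_1,x_2),v(x_1)\rangle\Big]\,d\beta_{0,\star},$$ with $S_{\Lambda,\Sigma}(x_1,x_2)=\frac{\sin(\sqrt{\Sigma/(4\Lambda)}\|x_1-x_2\|)}{\|x_1-x_2\|}(x_2-x_1)$ for $x_1\ne x_2$ and $S_{\Lambda,\Sigma}(x_1,x_1)=0$.
   Context: $\mathcal{M}(X)$: finite nonnegative Radon measures on $X$. Cone: $\mathfrak{C}=(X\times[0,\infty))/\sim$, where $(x_1,r_1)\sim(x_2,r_2)$ iff $r_1=r_2=0$ or ($r_1=r_2$, $x_1=x_2$); $[x,r]$ denotes classes, $\mathfrak{o}$ the vertex, identified with $[\bar x,0]$ for a fixed $\bar x\in X$. Cone distance: $\mathsf{d}_{\mathfrak{C},\Lambda,\Sigma}([x_1,r_1],[x_2,r_2])^2=\frac4\Sigma\big(r_1^2+r_2^2-2r_1r_2\cos(\min\{\sqrt{\Sigma/(4\Lambda)}\|x_1-x_2\|,\pi\})\big)$. $\mathcal{M}_2(\mathfrak{C})$: finite nonnegative Radon measures on $\mathfrak{C}$ with finite second moment $\int\mathsf{d}_{\mathfrak{C},\Lambda,\Sigma}([x,r],\mathfrak{o})^2d\alpha<\infty$. For $\alpha\in\mathcal{M}_2(\mathfrak{C})$, $\mathfrak{h}\alpha\in\mathcal{M}(X)$ is defined by $\int_X\phi\,d(\mathfrak{h}\alpha)=\int_{\mathfrak{C}}r^2\phi(x)\,d\alpha([x,r])$. The Hellinger–Kantorovich distance satisfies (cone formulation) $\mathrm{HK}_{\Lambda,\Sigma}(\mu_1,\mu_2)^2=\min\{\int_{\mathfrak{C}\times\mathfrak{C}}\mathsf{d}_{\mathfrak{C},\Lambda,\Sigma}^2\,d\beta+\frac4\Sigma\sum_{i=1}^2(\mu_i-\mathfrak{h}\beta_i)(X)\}$,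 the minimum over finite nonnegative Radon measures $\beta$ on $\mathfrak{C}\times\mathfrak{C}$ whose marginals $\beta_1,\beta_2$ lie in $\mathcal{M}_2(\mathfrak{C})$ with $\mathfrak{h}\beta_i\le\mu_i$; $\beta$ is called optimal if it attains this minimum. (It is known that such optimal $\beta$ give no mass to $\{r_1,r_2>0,\ \|x_1-x_2\|>\pi\sqrt{\Lambda/\Sigma}\}$.) A number $\varsigma$ belongs to the Fréchet subdifferential of $f:\mathcal{N}\to\mathbb{R}$ at $0$ iff $\liminf_{h\to0}\frac{f(h)-f(0)-\varsigma h}{|h|}\ge0$. *)

theory Defs
  imports "HOL-Analysis.Analysis"
begin

text \<open>The separable Hilbert space is a type of class real_inner and polish_space
(complete + second countable). Finite nonnegative (Radon) measures on X are finite Borel measures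
on the whole space concentrated on X (on a Polish space every finite Borel measure is Radon).
The cone over X is represented by canonical representatives: points (x,r) with x in X and r > 0,
together with the vertex (xbar,0) for a fixed xbar in X.\<close>

definition meas_on :: "'a::topological_space set \<Rightarrow> 'a measure \<Rightarrow> bool" where
  "meas_on X M \<longleftrightarrow> sets M = sets borel \<and> emeasure M (space M) < \<infinity> \<and> emeasure M (space M - X) = 0"

definition cone_set :: "'a set \<Rightarrow> 'a \<Rightarrow> ('a \<times> real) set" where
  "cone_set X xbar = {(x, r). x \<in> X \<and> 0 < r} \<union> {(xbar, 0)}"

definition cone_vertex :: "'a \<Rightarrow> 'a \<times> real" where
  "cone_vertex xbar = (xbar, 0)"

definition cone_d2 :: "real \<Rightarrow> real \<Rightarrow> ('a::real_normed_vector \<times> real) \<Rightarrow> ('a \<times> real) \<Rightarrow> real" where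
  "cone_d2 \<Lambda> \<Sigma> p q = (4 / \<Sigma>) * ((snd p)\<^sup>2 + (snd q)\<^sup>2
      - 2 * snd p * snd q * cos (min (sqrt (\<Sigma> / (4 * \<Lambda>)) * norm (fst p - fst q)) pi))"

definition cone_M2 :: "real \<Rightarrow> real \<Rightarrow> 'a::real_normed_vector set \<Rightarrow> 'a \<Rightarrow> ('a \<times> real) measure \<Rightarrow> bool" where
  "cone_M2 \<Lambda> \<Sigma> X xbar \<alpha> \<longleftrightarrow> sets \<alpha> = sets borel \<and> emeasure \<alpha> (space \<alpha>) < \<infinity>
     \<and> emeasure \<alpha> (space \<alpha> - cone_set X xbar) = 0
     \<and> (\<integral>\<^sup>+ p. ennreal (cone_d2 \<Lambda> \<Sigma> p (cone_vertex xbar)) \<partial>\<alpha>) < \<infinity>"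

definition hmarg :: "('a::topological_space \<times> real) measure \<Rightarrow> 'a measure" where
  "hmarg \<alpha> = distr (density \<alpha> (\<lambda>p. ennreal ((snd p)\<^sup>2))) borel fst"

definition meas_le :: "'a measure \<Rightarrow> 'a measure \<Rightarrow> bool" where
  "meas_le M N \<longleftrightarrow> (\<forall>A \<in> sets M. emeasure M A \<le> emeasure N A)"

definition marg1 :: "(('a::topological_space \<times> real) \<times> ('a \<times> real)) measure \<Rightarrow> ('a \<times> real) measure" where
  "marg1 \<beta> = distr \<beta> borel fst"

definition marg2 :: "(('a::topological_space \<times> real) \<times> ('a \<times> real)) measure \<Rightarrow> ('a \<times> real) measure" where
  "marg2 \<beta> = distr \<beta> borel snd"

definition HK_admissible :: "real \<Rightarrow> real \<Rightarrow> 'a::{real_normed_vector, second_countable_topology} set \<Rightarrow> 'a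
    \<Rightarrow> 'a measure \<Rightarrow> 'a measure \<Rightarrow> (('a \<times> real) \<times> ('a \<times> real)) measure \<Rightarrow> bool" where
  "HK_admissible \<Lambda> \<Sigma> X xbar \<mu>1 \<mu>2 \<beta> \<longleftrightarrow>
     sets \<beta> = sets borel \<and> emeasure \<beta> (space \<beta>) < \<infinity>
     \<and> emeasure \<beta> (space \<beta> - cone_set X xbar \<times> cone_set X xbar) = 0
     \<and> cone_M2 \<Lambda> \<Sigma> X xbar (marg1 \<beta>) \<and> cone_M2 \<Lambda> \<Sigma> X xbar (marg2 \<beta>)
     \<and> meas_le (hmarg (marg1 \<beta>)) \<mu>1 \<and> meas_le (hmarg (marg2 \<beta>)) \<mu>2"

definition HK_cost :: "real \<Rightarrow> real \<Rightarrow> 'a::{real_normed_vector, second_countable_topology} measure \<Rightarrow> 'a measure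
    \<Rightarrow> (('a \<times> real) \<times> ('a \<times> real)) measure \<Rightarrow> real" where
  "HK_cost \<Lambda> \<Sigma> \<mu>1 \<mu>2 \<beta> =
     (\<integral> pq. cone_d2 \<Lambda> \<Sigma> (fst pq) (snd pq) \<partial>\<beta>)
     + (4 / \<Sigma>) * ((measure \<mu>1 (space \<mu>1) - measure (hmarg (marg1 \<beta>)) (space (hmarg (marg1 \<beta>))))
                 + (measure \<mu>2 (space \<mu>2) - measure (hmarg (marg2 \<beta>)) (space (hmarg (marg2 \<beta>)))))"

text \<open>HK^2 as the infimum (it is known to be attained) of the cone formulation.\<close>
definition HK2 :: "real \<Rightarrow> real \<Rightarrow> 'a::{real_normed_vector, second_countable_topology} set \<Rightarrow> 'a
    \<Rightarrow> 'a measure \<Rightarrow> 'a measure \<Rightarrow> real" where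
  "HK2 \<Lambda> \<Sigma> X xbar \<mu>1 \<mu>2 = Inf (HK_cost \<Lambda> \<Sigma> \<mu>1 \<mu>2 ` {\<beta>. HK_admissible \<Lambda> \<Sigma> X xbar \<mu>1 \<mu>2 \<beta>})"

definition HK_optimal :: "real \<Rightarrow> real \<Rightarrow> 'a::{real_normed_vector, second_countable_topology} set \<Rightarrow> 'a
    \<Rightarrow> 'a measure \<Rightarrow> 'a measure \<Rightarrow> (('a \<times> real) \<times> ('a \<times> real)) measure \<Rightarrow> bool" where
  "HK_optimal \<Lambda> \<Sigma> X xbar \<mu>1 \<mu>2 \<beta> \<longleftrightarrow> HK_admissible \<Lambda> \<Sigma> X xbar \<mu>1 \<mu>2 \<beta>
     \<and> (\<forall>\<beta>'. HK_admissible \<Lambda> \<Sigma> X xbar \<mu>1 \<mu>2 \<beta>' \<longrightarrow> HK_cost \<Lambda> \<Sigma> \<mu>1 \<mu>2 \<beta> \<le> HK_cost \<Lambda> \<Sigma> \<mu>1 \<mu>2 \<beta>')"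

definition frechet_subdiff0 :: "(real \<Rightarrow> real) \<Rightarrow> real set" where
  "frechet_subdiff0 f = {\<zeta>. Liminf (at 0) (\<lambda>h. ereal ((f h - f 0 - \<zeta> * h) / \<bar>h\<bar>)) \<ge> 0}"

definition S_LS :: "real \<Rightarrow> real \<Rightarrow> 'a::real_normed_vector \<Rightarrow> 'a \<Rightarrow> 'a" where
  "S_LS \<Lambda> \<Sigma> x1 x2 = (if x1 = x2 then 0
     else (sin (sqrt (\<Sigma> / (4 * \<Lambda>)) * norm (x1 - x2)) / norm (x1 - x2)) *\<^sub>R (x2 - x1))"

definition frakF :: "real \<Rightarrow> real \<Rightarrow> 'a::{real_inner, second_countable_topology} set \<Rightarrow> 'a
    \<Rightarrow> (('a \<times> real) \<times> ('a \<times> real)) measure \<Rightarrow> ('a \<Rightarrow> 'a) \<Rightarrow> ('a \<Rightarrow> real) \<Rightarrow> real" where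
  "frakF \<Lambda> \<Sigma> X xbar \<beta> v R = (4 / \<Sigma>) *
     (\<integral>pq \<in> cone_set X xbar \<times> cone_set X xbar.
        (let x1 = fst (fst pq); r1 = snd (fst pq); x2 = fst (snd pq); r2 = snd (snd pq);
             k = sqrt (\<Sigma> / (4 * \<Lambda>))
         in - r1\<^sup>2 * R x1 + r1 * r2 * R x1 * cos (k * norm (x1 - x2))
            + r1 * r2 * k * inner (S_LS \<Lambda> \<Sigma> x1 x2) (v x1)) \<partial>\<beta>)"

end

theory Submission
  imports Defs
begin


lemma dc_at0:
  fixes s :: "real \<Rightarrow> 'b \<Rightarrow> real" and w f :: "'b \<Rightarrow> real"
  assumes "f \<in> borel_measurable M" "\<And>t. s t \<in> borel_measurable M" "integrable M w"
    and lim: "AE x in M. ((\<lambda>t. s t x) \<longlongrightarrow> f x) (at 0)"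
    and bound: "\<And>t. AE x in M. norm (s t x) \<le> w x"
  shows "((\<lambda>t. integral\<^sup>L M (s t)) \<longlongrightarrow> integral\<^sup>L M f) (at 0)"
  unfolding tendsto_at_iff_sequentially
proof (intro allI impI)
  fix X :: "nat \<Rightarrow> real" assume X: "\<forall>i. X i \<in> UNIV - {0}" "X \<longlonglongrightarrow> 0"
  have Xa: "filterlim X (at 0) sequentially"
    using X by (auto simp: filterlim_at intro!: always_eventually)
  show "((\<lambda>t. integral\<^sup>L M (s t)) \<circ> X) \<longlonglongrightarrow> integral\<^sup>L M f"
    unfolding comp_def
  proof (rule integral_dominated_convergence[where w=w])
    show "AE x in M. (\<lambda>i. s (X i) x) \<longlonglongrightarrow> f x"
      using lim by eventually_elim (rule filterlim_compose[OF _ Xa])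
  qed (use assms in auto)
qed

lemma meas_unique:
  fixes M N :: "'a::metric_space measure" and X :: "'a set"
  assumes sM: "sets M = sets borel" and sN: "sets N = sets borel"
    and fM: "emeasure M (space M) < \<infinity>" and fN: "emeasure N (space N) < \<infinity>"
    and X: "closed X" and nM: "emeasure M (space M - X) = 0" and nN: "emeasure N (space N - X) = 0"
    and eq: "\<And>\<phi> :: 'a \<Rightarrow> real. continuous_on UNIV \<phi> \<Longrightarrow> (\<And>x. 0 \<le> \<phi> x) \<Longrightarrow> (\<And>x. \<phi> x \<le> 1) \<Longrightarrow>
        (\<integral>x \<in> X. \<phi> x \<partial>M) = (\<integral>x \<in> X. \<phi> x \<partial>N)"
  shows "M = N"
proof -
  have spM: "space M = UNIV" using sets_eq_imp_space_eq[OF sM] by simp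
  have spN: "space N = UNIV" using sets_eq_imp_space_eq[OF sN] by simp
  interpret M: finite_measure M by (rule finite_measureI) (use fM in auto)
  interpret N: finite_measure N by (rule finite_measureI) (use fN in auto)
  have Xb: "X \<in> sets borel" using X by auto
  have key: "emeasure L C = ennreal (lim (\<lambda>n. \<integral>x \<in> X. max 0 (1 - real n * infdist x C) \<partial>L))"
    if C: "closed C" "C \<noteq> {}" and sL: "sets L = sets borel" and fL: "finite_measure L"
      and nL: "emeasure L (space L - X) = 0" for L :: "'a measure" and C
  proof -
    interpret L: finite_measure L by (rule fL)
    have spL: "space L = UNIV" using sets_eq_imp_space_eq[OF sL] by simp
    have Cb: "C \<in> sets L" "X \<in> sets L" using C X sL by auto
    have conv: "(\<lambda>n. \<integral>x \<in> X. max 0 (1 - real n * infdist x C) \<partial>L) \<longlonglongrightarrow> (\<integral>x. indicator X x * indicator C x \<partial>L)"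
      unfolding set_lebesgue_integral_def
    proof (rule integral_dominated_convergence[where w="\<lambda>_. 1"])
      show "(\<lambda>x. indicator X x * indicator C x :: real) \<in> borel_measurable L"
        by (intro borel_measurable_times borel_measurable_indicator Cb)
      show "(\<lambda>x. indicator X x *\<^sub>R max 0 (1 - real i * infdist x C)) \<in> borel_measurable L" for i
      proof -
        have "continuous_on UNIV (\<lambda>x. max 0 (1 - real i * infdist x C))"
          by (intro continuous_intros)
        then have "(\<lambda>x. max 0 (1 - real i * infdist x C)) \<in> borel_measurable borel"
          by (rule borel_measurable_continuous_onI)
        then have "(\<lambda>x. max 0 (1 - real i * infdist x C)) \<in> borel_measurable L"
          using measurable_cong_sets[OF sL refl, of borel] by blast
        then show ?thesis
          by (rule borel_measurable_scaleR[OF borel_measurable_indicator[OF Cb(2)]])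
      qed
      show "integrable L (\<lambda>_. 1::real)" by simp
      show "AE x in L. norm (indicator X x *\<^sub>R max 0 (1 - real i * infdist x C)) \<le> 1" for i
      proof (rule AE_I2)
        fix x
        have "0 \<le> infdist x C" by (rule infdist_nonneg)
        then show "norm (indicator X x *\<^sub>R max 0 (1 - real i * infdist x C)) \<le> 1"
          by (simp add: indicator_def)
      qed
      show "AE x in L. (\<lambda>i. indicator X x *\<^sub>R max 0 (1 - real i * infdist x C)) \<longlonglongrightarrow> indicator X x * indicator C x"
      proof (rule AE_I2)
        fix x
        show "(\<lambda>i. indicator X x *\<^sub>R max 0 (1 - real i * infdist x C)) \<longlonglongrightarrow> indicator X x * indicator C x"
        proof (cases "x \<in> C")
          case True then show ?thesis by (simp add: indicator_def)
        next
          case False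
          then have d: "infdist x C > 0" using in_closed_iff_infdist_zero[OF C] infdist_nonneg[of x C] by auto
          obtain n0 :: nat where n0: "real n0 > 1 / infdist x C" using reals_Archimedean2 by blast
          have "eventually (\<lambda>i. indicator X x *\<^sub>R max 0 (1 - real i * infdist x C) = 0) sequentially"
            unfolding eventually_sequentially
          proof (intro exI allI impI)
            fix i assume "n0 \<le> i"
            then have "real i > 1 / infdist x C" using n0 by linarith
            then have "real i * infdist x C > 1" using d by (simp add: field_simps)
            then show "indicator X x *\<^sub>R max 0 (1 - real i * infdist x C) = 0" by simp
          qed
          then show ?thesis using False by (simp add: tendsto_eventually)
        qed
      qed
    qed
    have "(\<integral>x. indicator X x * indicator C x \<partial>L) = measure L (X \<inter> C)"
      by (simp add: indicator_inter_arith[symmetric] spL)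
    also have "\<dots> = measure L C"
    proof -
      have "emeasure L (C - X) = 0"
        by (rule emeasure_eq_0[OF _ nL]) (use Cb spL sets.compl_sets[OF Cb(2)] in auto)
      then have "measure L (C - X) = 0" by (simp add: measure_def)
      moreover have "measure L C = measure L (X \<inter> C) + measure L (C - X)"
      proof -
        have "C = (X \<inter> C) \<union> (C - X)" by blast
        then have "measure L C = measure L ((X \<inter> C) \<union> (C - X))" by simp
        also have "\<dots> = measure L (X \<inter> C) + measure L (C - X)"
          using Cb by (intro L.finite_measure_Union) auto
        finally show ?thesis .
      qed
      ultimately show ?thesis by simp
    qed
    finally show ?thesis using conv L.emeasure_eq_measure by (simp add: limI)
  qed
  show ?thesis
  proof (rule measure_eqI_generator_eq[where E="Collect closed" and \<Omega>=UNIV and A="\<lambda>_. UNIV"])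
    show "Int_stable (Collect closed)" by (auto simp: Int_stable_def)
    show "Collect closed \<subseteq> Pow UNIV" by auto
    show "sets M = sigma_sets UNIV (Collect closed)" "sets N = sigma_sets UNIV (Collect closed)"
      using sM sN by (simp_all add: borel_eq_closed)
    show "range (\<lambda>_. UNIV) \<subseteq> Collect closed" "(\<Union>i. UNIV) = UNIV" by auto
    show "emeasure M UNIV \<noteq> \<infinity>" for i :: nat using fM spM by auto
    fix C :: "'a set" assume "C \<in> Collect closed"
    then have C: "closed C" by simp
    show "emeasure M C = emeasure N C"
    proof (cases "C = {}")
      case True then show ?thesis by simp
    next
      case False
      have "(\<integral>x \<in> X. max 0 (1 - real n * infdist x C) \<partial>M) = (\<integral>x \<in> X. max 0 (1 - real n * infdist x C) \<partial>N)" for n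
        by (rule eq[of "\<lambda>x. max 0 (1 - real n * infdist x C)"]) (auto intro!: continuous_intros simp: infdist_nonneg)
      then show ?thesis
        using key[OF C False sM M.finite_measure_axioms nM] key[OF C False sN N.finite_measure_axioms nN] by simp
    qed
  qed
qed


lemma d2_vtx: "cone_d2 \<Lambda> \<Sigma> p (cone_vertex xbar) = 4 / \<Sigma> * (snd p)\<^sup>2"
  by (simp add: cone_d2_def cone_vertex_def)

lemma d2_nonneg: assumes "\<Sigma> > 0" shows "0 \<le> cone_d2 \<Lambda> \<Sigma> p q"
proof -
  let ?c = "cos (min (sqrt (\<Sigma> / (4 * \<Lambda>)) * norm (fst p - fst q)) pi)"
  have c: "\<bar>?c\<bar> \<le> 1" by (rule abs_cos_le_one)
  have "2 * snd p * snd q * ?c \<le> 2 * \<bar>snd p\<bar> * \<bar>snd q\<bar>"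
  proof -
    have "2 * snd p * snd q * ?c \<le> \<bar>2 * snd p * snd q * ?c\<bar>" by simp
    also have "\<dots> = 2 * \<bar>snd p\<bar> * \<bar>snd q\<bar> * \<bar>?c\<bar>" by (simp add: abs_mult)
    also have "\<dots> \<le> 2 * \<bar>snd p\<bar> * \<bar>snd q\<bar> * 1"
      by (intro mult_left_mono c) auto
    finally show ?thesis by simp
  qed
  moreover have "0 \<le> (\<bar>snd p\<bar> - \<bar>snd q\<bar>)\<^sup>2" by simp
  moreover have "(\<bar>snd p\<bar> - \<bar>snd q\<bar>)\<^sup>2 = (snd p)\<^sup>2 + (snd q)\<^sup>2 - 2 * \<bar>snd p\<bar> * \<bar>snd q\<bar>"
    by (simp add: power2_diff)
  ultimately have "0 \<le> (snd p)\<^sup>2 + (snd q)\<^sup>2 - 2 * snd p * snd q * ?c"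
    by linarith
  then show ?thesis using assms by (simp add: cone_d2_def)
qed

lemma fst_bm[measurable]: "fst \<in> borel_measurable (borel :: ('a::second_countable_topology \<times> 'b::second_countable_topology) measure)"
  by (intro borel_measurable_continuous_onI continuous_intros)
lemma snd_bm[measurable]: "snd \<in> borel_measurable (borel :: ('a::second_countable_topology \<times> 'b::second_countable_topology) measure)"
  by (intro borel_measurable_continuous_onI continuous_intros)

lemma nn_integral_hmarg:
  fixes \<alpha> :: "('a::second_countable_topology \<times> real) measure"
  assumes "sets \<alpha> = sets borel" and [measurable]: "w \<in> borel_measurable borel"
  shows "(\<integral>\<^sup>+x. w x \<partial>hmarg \<alpha>) = (\<integral>\<^sup>+p. ennreal ((snd p)\<^sup>2) * w (fst p) \<partial>\<alpha>)"
proof -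
  have m: "fst \<in> measurable (density \<alpha> (\<lambda>p. ennreal ((snd p)\<^sup>2))) borel"
    unfolding measurable_cong_sets[OF sets_density refl] measurable_cong_sets[OF assms(1) refl] by (rule fst_bm)
  have "(\<integral>\<^sup>+x. w x \<partial>hmarg \<alpha>) = (\<integral>\<^sup>+p. w (fst p) \<partial>density \<alpha> (\<lambda>p. ennreal ((snd p)\<^sup>2)))"
    unfolding hmarg_def by (rule nn_integral_distr[OF m]) simp
  also have "\<dots> = (\<integral>\<^sup>+p. ennreal ((snd p)\<^sup>2) * w (fst p) \<partial>\<alpha>)"
    using assms(1) by (subst nn_integral_density) (simp_all add: measurable_cong_sets[OF assms(1) refl])
  finally show ?thesis .
qed

lemma sets_hmarg[simp]: "sets (hmarg \<alpha>) = sets borel" by (simp add: hmarg_def)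
lemma space_hmarg[simp]: "space (hmarg \<alpha>) = UNIV" by (simp add: hmarg_def)

lemma emeasure_hmarg:
  fixes \<alpha> :: "('a::second_countable_topology \<times> real) measure"
  assumes "sets \<alpha> = sets borel" and [measurable]: "A \<in> sets borel"
  shows "emeasure (hmarg \<alpha>) A = (\<integral>\<^sup>+p. ennreal ((snd p)\<^sup>2) * indicator A (fst p) \<partial>\<alpha>)"
proof -
  have "emeasure (hmarg \<alpha>) A = (\<integral>\<^sup>+x. indicator A x \<partial>hmarg \<alpha>)"
    using assms by (subst nn_integral_indicator) auto
  also have "\<dots> = (\<integral>\<^sup>+p. ennreal ((snd p)\<^sup>2) * indicator A (fst p) \<partial>\<alpha>)" by (rule nn_integral_hmarg) (use assms in auto)
  finally show ?thesis .
qed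


locale HKP =
  fixes X :: "'a::{real_inner, polish_space} set"
    and xbar :: 'a
    and \<Lambda> \<Sigma> :: real
    and v :: "'a \<Rightarrow> 'a" and R :: "'a \<Rightarrow> real"
    and N :: "real set"
    and \<nu>0 \<mu> :: "'a measure" and \<nu> :: "real \<Rightarrow> 'a measure"
    and \<beta>0 :: "(('a \<times> real) \<times> ('a \<times> real)) measure"
  assumes closedX: "closed X" and convX: "convex X" and xbarX: "xbar \<in> X"
    and Lpos: "\<Lambda> > 0" and Spos: "\<Sigma> > 0"
    and vmeas: "v \<in> borel_measurable (restrict_space borel X)" and vbdd: "bounded (v ` X)"
    and Rmeas: "R \<in> borel_measurable (restrict_space borel X)" and Rbdd: "bounded (R ` X)"
    and N0: "0 \<in> interior N"
    and Nprop: "\<And>h x. h \<in> N \<Longrightarrow> x \<in> X \<Longrightarrow> x + h *\<^sub>R v x \<in> X \<and> 1 + h * R x > 0"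
    and nu0: "meas_on X \<nu>0"
    and nuh: "\<And>h. h \<in> N \<Longrightarrow> meas_on X (\<nu> h)"
    and nueq: "\<And>h \<phi>. h \<in> N \<Longrightarrow> continuous_on X \<phi> \<Longrightarrow> bounded (\<phi> ` X) \<Longrightarrow>
           (\<integral>x \<in> X. (\<phi> x :: real) \<partial>(\<nu> h))
             = (\<integral>x \<in> X. \<phi> (x + h *\<^sub>R v x) * (1 + h * R x)\<^sup>2 \<partial>\<nu>0)"
    and muX: "meas_on X \<mu>"
    and opt: "HK_optimal \<Lambda> \<Sigma> X xbar \<nu>0 \<mu> \<beta>0"
begin

definition "k = sqrt (\<Sigma> / (4 * \<Lambda>))"
definition "Rx x = indicator X x * R x"
definition "vx x = indicator X x *\<^sub>R v x"
definition "CS = cone_set X xbar"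
definition T :: "real \<Rightarrow> 'a \<times> real \<Rightarrow> 'a \<times> real" where "T h p = (if fst p \<in> X \<and> 0 < snd p
    then (fst p + h *\<^sub>R vx (fst p), snd p * (1 + h * Rx (fst p))) else (xbar, 0))"
definition \<Phi> :: "real \<Rightarrow> ('a \<times> real) \<times> ('a \<times> real) \<Rightarrow> ('a \<times> real) \<times> ('a \<times> real)" where "\<Phi> h pq = (T h (fst pq), snd pq)"
definition "\<beta>G h G = distr (density \<beta>0 (indicator G)) borel (\<Phi> h)"
definition ch :: "real \<Rightarrow> ('a \<times> real) \<times> ('a \<times> real) \<Rightarrow> real" where "ch h pq = cos (min (k * norm (fst (fst pq) + h *\<^sub>R vx (fst (fst pq)) - fst (snd pq))) pi)"
definition g :: "real \<Rightarrow> ('a \<times> real) \<times> ('a \<times> real) \<Rightarrow> real" where "g h pq = snd (fst pq) * snd (snd pq) * (1 + h * Rx (fst (fst pq))) * ch h pq"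
definition "mnu h = (\<integral>x. indicator X x * (1 + h * Rx x)\<^sup>2 \<partial>\<nu>0)"
definition "mmu = measure \<mu> (space \<mu>)"
definition "Cost h G = 4 / \<Sigma> * (mnu h + mmu) - 8 / \<Sigma> * (\<integral>pq. indicator G pq * g h pq \<partial>\<beta>0)"
definition "rho h = distr (density \<nu>0 (\<lambda>x. ennreal (indicator X x * (1 + h * Rx x)\<^sup>2))) borel (\<lambda>x. x + h *\<^sub>R vx x)"
definition "BR = (SOME B. 0 \<le> B \<and> (\<forall>x. \<bar>Rx x\<bar> \<le> B))"
definition "BV = (SOME B. 0 \<le> B \<and> (\<forall>x. norm (vx x) \<le> B))"

lemma Xb[measurable]: "X \<in> sets borel" using closedX by simp

lemma Rx_meas[measurable]: "Rx \<in> borel_measurable borel"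
  using Rmeas borel_measurable_restrict_space_iff[of X borel R]
  by (simp add: Rx_def[abs_def])

lemma vx_meas[measurable]: "vx \<in> borel_measurable borel"
  using vmeas borel_measurable_restrict_space_iff[of X borel v]
  by (simp add: vx_def[abs_def])

lemma BR: "0 \<le> BR" "\<bar>Rx x\<bar> \<le> BR"
proof -
  obtain B where B: "\<forall>y\<in>R ` X. norm y \<le> B" using Rbdd by (auto simp: bounded_iff)
  have "0 \<le> max B 0 \<and> (\<forall>x. \<bar>Rx x\<bar> \<le> max B 0)"
    using B by (auto simp: Rx_def indicator_def)
  then have "0 \<le> BR \<and> (\<forall>x. \<bar>Rx x\<bar> \<le> BR)"
    unfolding BR_def by (rule someI)
  then show "0 \<le> BR" "\<bar>Rx x\<bar> \<le> BR" by auto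
qed

lemma BV: "0 \<le> BV" "norm (vx x) \<le> BV"
proof -
  obtain B where B: "\<forall>y\<in>v ` X. norm y \<le> B" using vbdd by (auto simp: bounded_iff)
  have "0 \<le> max B 0 \<and> (\<forall>x. norm (vx x) \<le> max B 0)"
    using B by (auto simp: vx_def indicator_def)
  then have "0 \<le> BV \<and> (\<forall>x. norm (vx x) \<le> BV)"
    unfolding BV_def by (rule someI)
  then show "0 \<le> BV" "norm (vx x) \<le> BV" by auto
qed

lemma CS_eq: "CS = (X \<times> {0<..}) \<union> {(xbar, 0)}"
  by (auto simp: CS_def cone_set_def)

lemma CS_sets[measurable]: "CS \<in> sets borel"
proof -
  have a: "fst -` X \<in> sets (borel :: ('a \<times> real) measure)"
    using measurable_sets[OF fst_bm Xb] by simp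
  have b: "snd -` {0<..} \<in> sets (borel :: ('a \<times> real) measure)"
    using measurable_sets[OF snd_bm borel_open[OF open_greaterThan[of 0]]] by simp
  have e: "X \<times> {0<..} = fst -` X \<inter> snd -` {0<..}" by auto
  have "X \<times> {0<..} \<in> sets (borel :: ('a \<times> real) measure)" unfolding e by (rule sets.Int[OF a b])
  then show ?thesis unfolding CS_eq by (intro sets.Un) auto
qed

lemma T_meas[measurable]: "T h \<in> borel_measurable borel"
  unfolding T_def[abs_def] by measurable

lemma Phi_meas[measurable]: "\<Phi> h \<in> borel_measurable borel"
  unfolding \<Phi>_def[abs_def]
  by (rule borel_measurable_Pair[OF measurable_compose[OF fst_bm T_meas] snd_bm])

lemma T_CS: "h \<in> N \<Longrightarrow> T h p \<in> CS"
  using Nprop[of h "fst p"] xbarX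
  by (auto simp: T_def CS_def cone_set_def vx_def Rx_def)

lemma T0: "p \<in> CS \<Longrightarrow> T 0 p = p"
  by (auto simp: T_def CS_def cone_set_def)

lemma adm0: "HK_admissible \<Lambda> \<Sigma> X xbar \<nu>0 \<mu> \<beta>0"
  using opt by (simp add: HK_optimal_def)

lemma sets_b0[measurable_cong]: "sets \<beta>0 = sets borel"
  using adm0 by (simp add: HK_admissible_def)

lemma space_b0[simp]: "space \<beta>0 = UNIV"
  using sets_eq_imp_space_eq[OF sets_b0] by simp

lemma fin_b0: "finite_measure \<beta>0"
  using adm0 by (intro finite_measureI) (auto simp: HK_admissible_def)

lemma CSCS_sets[measurable]: "CS \<times> CS \<in> sets borel"
proof -
  have a: "fst -` CS \<in> sets (borel :: (('a \<times> real) \<times> ('a \<times> real)) measure)"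
    using measurable_sets[OF fst_bm CS_sets] by simp
  have b: "snd -` CS \<in> sets (borel :: (('a \<times> real) \<times> ('a \<times> real)) measure)"
    using measurable_sets[OF snd_bm CS_sets] by simp
  have e: "CS \<times> CS = fst -` CS \<inter> snd -` CS" by auto
  show ?thesis unfolding e by (rule sets.Int[OF a b])
qed

lemma AE_CS: "AE pq in \<beta>0. pq \<in> CS \<times> CS"
proof (rule AE_I')
  have e: "emeasure \<beta>0 (space \<beta>0 - CS \<times> CS) = 0"
    using adm0 unfolding HK_admissible_def CS_def by blast
  have "UNIV - CS \<times> CS \<in> sets (borel :: (('a \<times> real) \<times> ('a \<times> real)) measure)"
    using sets.compl_sets[OF CSCS_sets] by simp
  then have "UNIV - CS \<times> CS \<in> sets \<beta>0" unfolding sets_b0 .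
  then show "UNIV - CS \<times> CS \<in> null_sets \<beta>0"
    using e by (intro null_setsI) auto
qed auto

lemma sets_nu0: "sets \<nu>0 = sets borel" and space_nu0[simp]: "space \<nu>0 = UNIV"
  and fin_nu0: "finite_measure \<nu>0" and null_nu0: "emeasure \<nu>0 (UNIV - X) = 0"
proof -
  show s: "sets \<nu>0 = sets borel" using nu0 by (simp add: meas_on_def)
  show sp: "space \<nu>0 = UNIV" using sets_eq_imp_space_eq[OF s] by simp
  show "finite_measure \<nu>0" using nu0 by (intro finite_measureI) (auto simp: meas_on_def)
  show "emeasure \<nu>0 (UNIV - X) = 0" using nu0 sp by (simp add: meas_on_def)
qed

lemma sets_mu: "sets \<mu> = sets borel" and space_mu[simp]: "space \<mu> = UNIV"
  and fin_mu: "finite_measure \<mu>"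
proof -
  show s: "sets \<mu> = sets borel" using muX by (simp add: meas_on_def)
  show sp: "space \<mu> = UNIV" using sets_eq_imp_space_eq[OF s] by simp
  show "finite_measure \<mu>" using muX by (intro finite_measureI) (auto simp: meas_on_def)
qed

lemma meas_le_imp_le: assumes "meas_le M1 M2" "sets M1 = sets M2" shows "M1 \<le> M2"
proof -
  have sp: "space M1 = space M2" by (rule sets_eq_imp_space_eq[OF assms(2)])
  have "emeasure M1 A \<le> emeasure M2 A" for A
  proof (cases "A \<in> sets M1")
    case True then show ?thesis using assms(1) by (simp add: meas_le_def)
  next
    case False then have "A \<notin> sets M2" using assms(2) by simp
    then show ?thesis using False by (simp add: emeasure_notin_sets)
  qed
  then show ?thesis using sp assms(2) by (simp add: le_measure_iff le_fun_def)
qed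

lemma marg1_b0: "marg1 \<beta>0 = distr \<beta>0 borel fst" by (simp add: marg1_def)

lemma int_r1: "integrable \<beta>0 (\<lambda>pq. (snd (fst pq))\<^sup>2)"
proof -
  have "(\<integral>\<^sup>+ p. ennreal (cone_d2 \<Lambda> \<Sigma> p (cone_vertex xbar)) \<partial>marg1 \<beta>0) < \<infinity>"
    using adm0 by (simp add: HK_admissible_def cone_M2_def)
  also have "(\<integral>\<^sup>+ p. ennreal (cone_d2 \<Lambda> \<Sigma> p (cone_vertex xbar)) \<partial>marg1 \<beta>0)
      = (\<integral>\<^sup>+ pq. ennreal (4 / \<Sigma> * (snd (fst pq))\<^sup>2) \<partial>\<beta>0)"
    unfolding marg1_b0 d2_vtx by (subst nn_integral_distr) auto
  finally have fin: "(\<integral>\<^sup>+ pq. ennreal (4 / \<Sigma> * (snd (fst pq))\<^sup>2) \<partial>\<beta>0) < \<infinity>" .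
  have "integrable \<beta>0 (\<lambda>pq. 4 / \<Sigma> * (snd (fst pq))\<^sup>2)"
    using fin Spos by (intro integrableI_nn_integral_finite[where x="enn2real (\<integral>\<^sup>+ pq. ennreal (4 / \<Sigma> * (snd (fst pq))\<^sup>2) \<partial>\<beta>0)"]) (auto simp: less_top)
  note i = this
  have "integrable \<beta>0 (\<lambda>pq. (\<Sigma> / 4) * (4 / \<Sigma> * (snd (fst pq))\<^sup>2))"
    by (rule integrable_mult_right) (rule i)
  moreover have "(\<Sigma> / 4) * (4 / \<Sigma> * y) = y" for y using Spos by simp
  ultimately show ?thesis by simp
qed

lemma marg2_b0: "marg2 \<beta>0 = distr \<beta>0 borel snd" by (simp add: marg2_def)

lemma int_r2: "integrable \<beta>0 (\<lambda>pq. (snd (snd pq))\<^sup>2)"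
proof -
  have "(\<integral>\<^sup>+ p. ennreal (cone_d2 \<Lambda> \<Sigma> p (cone_vertex xbar)) \<partial>marg2 \<beta>0) < \<infinity>"
    using adm0 by (simp add: HK_admissible_def cone_M2_def)
  also have "(\<integral>\<^sup>+ p. ennreal (cone_d2 \<Lambda> \<Sigma> p (cone_vertex xbar)) \<partial>marg2 \<beta>0)
      = (\<integral>\<^sup>+ pq. ennreal (4 / \<Sigma> * (snd (snd pq))\<^sup>2) \<partial>\<beta>0)"
    unfolding marg2_b0 d2_vtx by (subst nn_integral_distr) auto
  finally have fin: "(\<integral>\<^sup>+ pq. ennreal (4 / \<Sigma> * (snd (snd pq))\<^sup>2) \<partial>\<beta>0) < \<infinity>" .
  have "integrable \<beta>0 (\<lambda>pq. 4 / \<Sigma> * (snd (snd pq))\<^sup>2)"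
    using fin Spos by (intro integrableI_nn_integral_finite[where x="enn2real (\<integral>\<^sup>+ pq. ennreal (4 / \<Sigma> * (snd (snd pq))\<^sup>2) \<partial>\<beta>0)"]) (auto simp: less_top)
  note i = this
  have "integrable \<beta>0 (\<lambda>pq. (\<Sigma> / 4) * (4 / \<Sigma> * (snd (snd pq))\<^sup>2))"
    by (rule integrable_mult_right) (rule i)
  moreover have "(\<Sigma> / 4) * (4 / \<Sigma> * y) = y" for y using Spos by simp
  ultimately show ?thesis by simp
qed

end

context HKP begin

lemma zero_N: "0 \<in> N" using N0 interior_subset by blast

definition "dens h x = indicator X x * (1 + h * Rx x)\<^sup>2"

lemma dens_meas[measurable]: "dens h \<in> borel_measurable borel"
  unfolding dens_def[abs_def] by measurable

lemma dens_nonneg: "0 \<le> dens h x" by (simp add: dens_def)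

lemma rho_alt: "rho h = distr (density \<nu>0 (\<lambda>x. ennreal (dens h x))) borel (\<lambda>x. x + h *\<^sub>R vx x)"
  by (simp add: rho_def dens_def)

lemma shift_meas[measurable]: "(\<lambda>x. x + h *\<^sub>R vx x) \<in> borel_measurable borel"
  by measurable

lemma sets_rho: "sets (rho h) = sets borel" by (simp add: rho_def)

lemma emeasure_rho:
  assumes [measurable]: "A \<in> sets borel"
  shows "emeasure (rho h) A = (\<integral>\<^sup>+x. ennreal (dens h x) * indicator A (x + h *\<^sub>R vx x) \<partial>\<nu>0)"
proof -
  have m: "(\<lambda>x. x + h *\<^sub>R vx x) \<in> measurable (density \<nu>0 (\<lambda>x. ennreal (dens h x))) borel"
    using measurable_cong_sets[OF sets_density[of \<nu>0] refl] sets_nu0 shift_meas[of h]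
    by (simp add: measurable_cong_sets[OF sets_nu0 refl])
  have "emeasure (rho h) A = emeasure (density \<nu>0 (\<lambda>x. ennreal (dens h x))) ((\<lambda>x. x + h *\<^sub>R vx x) -` A \<inter> UNIV)"
    unfolding rho_alt by (subst emeasure_distr[OF m]) simp_all
  also have "\<dots> = (\<integral>\<^sup>+x. ennreal (dens h x) * indicator ((\<lambda>x. x + h *\<^sub>R vx x) -` A \<inter> UNIV) x \<partial>\<nu>0)"
  proof (rule emeasure_density)
    show "(\<lambda>x. ennreal (dens h x)) \<in> borel_measurable \<nu>0"
      by (simp add: measurable_cong_sets[OF sets_nu0 refl])
    have "(\<lambda>x. x + h *\<^sub>R vx x) -` A \<inter> UNIV \<in> sets borel"
      using measurable_sets[OF shift_meas assms] by simp
    then show "(\<lambda>x. x + h *\<^sub>R vx x) -` A \<inter> UNIV \<in> sets \<nu>0" by (simp add: sets_nu0)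
  qed
  also have "\<dots> = (\<integral>\<^sup>+x. ennreal (dens h x) * indicator A (x + h *\<^sub>R vx x) \<partial>\<nu>0)"
    by (intro nn_integral_cong) (simp add: indicator_def)
  finally show ?thesis .
qed

lemma dens_le: "dens h x \<le> (1 + \<bar>h\<bar> * BR)\<^sup>2"
proof -
  have "\<bar>1 + h * Rx x\<bar> \<le> 1 + \<bar>h\<bar> * BR"
  proof -
    have "\<bar>h * Rx x\<bar> \<le> \<bar>h\<bar> * BR" using BR(2)[of x] by (simp add: abs_mult mult_left_mono)
    then show ?thesis by linarith
  qed
  then have "(1 + h * Rx x)\<^sup>2 \<le> (1 + \<bar>h\<bar> * BR)\<^sup>2"
    by (metis abs_le_square_iff abs_of_nonneg BR(1) abs_ge_zero add_nonneg_nonneg zero_le_mult_iff zero_le_one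
          dual_order.trans abs_abs)
  then show ?thesis by (simp add: dens_def indicator_def)
qed

lemma rho_finite: "emeasure (rho h) (space (rho h)) < \<infinity>"
proof -
  interpret F: finite_measure \<nu>0 by (rule fin_nu0)
  have "space (rho h) = UNIV" by (simp add: rho_def)
  then have "emeasure (rho h) (space (rho h)) = (\<integral>\<^sup>+x. ennreal (dens h x) * indicator UNIV (x + h *\<^sub>R vx x) \<partial>\<nu>0)"
    by (simp add: emeasure_rho)
  also have "\<dots> \<le> (\<integral>\<^sup>+x. ennreal ((1 + \<bar>h\<bar> * BR)\<^sup>2) \<partial>\<nu>0)"
    by (intro nn_integral_mono) (simp add: dens_le)
  also have "\<dots> = ennreal ((1 + \<bar>h\<bar> * BR)\<^sup>2) * emeasure \<nu>0 UNIV"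
    by (simp add: nn_integral_const)
  also have "\<dots> < \<infinity>"
  proof -
    have "emeasure \<nu>0 UNIV < top" using top.not_eq_extremum F.emeasure_finite[of UNIV] by metis
    then show ?thesis by (simp add: ennreal_mult_less_top)
  qed
  finally show ?thesis .
qed

lemma rho_null: assumes "h \<in> N" shows "emeasure (rho h) (space (rho h) - X) = 0"
proof -
  have "space (rho h) = UNIV" by (simp add: rho_def)
  then have "emeasure (rho h) (space (rho h) - X) = (\<integral>\<^sup>+x. ennreal (dens h x) * indicator (UNIV - X) (x + h *\<^sub>R vx x) \<partial>\<nu>0)"
    using Xb by (simp add: emeasure_rho sets.compl_sets)
  also have "\<dots> = (\<integral>\<^sup>+x. 0 \<partial>\<nu>0)"
  proof (intro nn_integral_cong)
    fix x show "ennreal (dens h x) * indicator (UNIV - X) (x + h *\<^sub>R vx x) = 0"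
      using Nprop[OF assms, of x] by (cases "x \<in> X") (auto simp: dens_def vx_def)
  qed
  finally show ?thesis by simp
qed

lemma rho_int:
  fixes \<phi> :: "'a \<Rightarrow> real"
  assumes h: "h \<in> N" and [measurable]: "\<phi> \<in> borel_measurable borel"
  shows "(\<integral>x \<in> X. \<phi> x \<partial>rho h) = (\<integral>x \<in> X. \<phi> (x + h *\<^sub>R v x) * (1 + h * R x)\<^sup>2 \<partial>\<nu>0)"
proof -
  have m: "(\<lambda>x. x + h *\<^sub>R vx x) \<in> measurable (density \<nu>0 (\<lambda>x. ennreal (dens h x))) borel"
    using measurable_cong_sets[OF sets_density[of \<nu>0] refl] sets_nu0 shift_meas[of h]
    by (simp add: measurable_cong_sets[OF sets_nu0 refl])
  have "(\<integral>x \<in> X. \<phi> x \<partial>rho h) = (\<integral>x. indicator X x * \<phi> x \<partial>rho h)"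
    by (simp add: set_lebesgue_integral_def)
  also have "\<dots> = (\<integral>x. indicator X (x + h *\<^sub>R vx x) * \<phi> (x + h *\<^sub>R vx x) \<partial>density \<nu>0 (\<lambda>x. ennreal (dens h x)))"
    unfolding rho_alt by (rule integral_distr[OF m]) measurable
  also have "\<dots> = (\<integral>x. dens h x *\<^sub>R (indicator X (x + h *\<^sub>R vx x) * \<phi> (x + h *\<^sub>R vx x)) \<partial>\<nu>0)"
    by (rule integral_density) (auto simp: measurable_cong_sets[OF sets_nu0 refl] dens_nonneg)
  also have "\<dots> = (\<integral>x. indicator X x *\<^sub>R (\<phi> (x + h *\<^sub>R v x) * (1 + h * R x)\<^sup>2) \<partial>\<nu>0)"
  proof (intro Bochner_Integration.integral_cong refl)
    fix x show "dens h x *\<^sub>R (indicator X (x + h *\<^sub>R vx x) * \<phi> (x + h *\<^sub>R vx x))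
        = indicator X x *\<^sub>R (\<phi> (x + h *\<^sub>R v x) * (1 + h * R x)\<^sup>2)"
      using Nprop[OF h, of x] by (cases "x \<in> X") (auto simp: dens_def vx_def Rx_def)
  qed
  finally show ?thesis by (simp add: set_lebesgue_integral_def)
qed

lemma nu_rho: assumes h: "h \<in> N" shows "\<nu> h = rho h"
proof (rule meas_unique[OF _ sets_rho _ rho_finite closedX _ rho_null[OF h]])
  show "sets (\<nu> h) = sets borel" "emeasure (\<nu> h) (space (\<nu> h)) < \<infinity>"
    "emeasure (\<nu> h) (space (\<nu> h) - X) = 0"
    using nuh[OF h] by (auto simp: meas_on_def)
  fix \<phi> :: "'a \<Rightarrow> real" assume c: "continuous_on UNIV \<phi>" and p: "\<And>x. 0 \<le> \<phi> x" "\<And>x. \<phi> x \<le> 1"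
  have cX: "continuous_on X \<phi>" using c by (rule continuous_on_subset) simp
  have ab: "\<bar>\<phi> x\<bar> \<le> 1" for x using p(1)[of x] p(2)[of x] by (simp add: abs_if)
  have bX: "bounded (\<phi> ` X)" using ab by (intro boundedI[where B=1]) auto
  have pm: "\<phi> \<in> borel_measurable borel" using c by (rule borel_measurable_continuous_onI)
  show "(\<integral>x \<in> X. \<phi> x \<partial>\<nu> h) = (\<integral>x \<in> X. \<phi> x \<partial>rho h)"
    using nueq[OF h cX bX] rho_int[OF h pm] by simp
qed

lemma nu_0: "\<nu> 0 = \<nu>0"
proof (rule meas_unique[OF _ sets_nu0 _ _ closedX])
  show "sets (\<nu> 0) = sets borel" "emeasure (\<nu> 0) (space (\<nu> 0)) < \<infinity>"
    "emeasure (\<nu> 0) (space (\<nu> 0) - X) = 0"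
    using nuh[OF zero_N] by (auto simp: meas_on_def)
  show "emeasure \<nu>0 (space \<nu>0) < \<infinity>" "emeasure \<nu>0 (space \<nu>0 - X) = 0"
    using nu0 by (auto simp: meas_on_def)
  fix \<phi> :: "'a \<Rightarrow> real" assume c: "continuous_on UNIV \<phi>" and p: "\<And>x. 0 \<le> \<phi> x" "\<And>x. \<phi> x \<le> 1"
  have cX: "continuous_on X \<phi>" using c by (rule continuous_on_subset) simp
  have ab: "\<bar>\<phi> x\<bar> \<le> 1" for x using p(1)[of x] p(2)[of x] by (simp add: abs_if)
  have bX: "bounded (\<phi> ` X)" using ab by (intro boundedI[where B=1]) auto
  show "(\<integral>x \<in> X. \<phi> x \<partial>\<nu> 0) = (\<integral>x \<in> X. \<phi> x \<partial>\<nu>0)"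
    using nueq[OF zero_N cX bX] by simp
qed

end

context HKP begin

lemma sets_B0G[measurable_cong]: "sets (density \<beta>0 (indicator G)) = sets borel"
  by (simp add: sets_b0)

lemma sets_betaG: "sets (\<beta>G h G) = sets borel" by (simp add: \<beta>G_def)
lemma space_betaG[simp]: "space (\<beta>G h G) = UNIV" by (simp add: \<beta>G_def)

lemma nn_betaG:
  assumes [measurable]: "G \<in> sets borel" "f \<in> borel_measurable borel"
  shows "(\<integral>\<^sup>+x. f x \<partial>\<beta>G h G) = (\<integral>\<^sup>+pq. indicator G pq * f (\<Phi> h pq) \<partial>\<beta>0)"
proof -
  have m: "\<Phi> h \<in> measurable (density \<beta>0 (indicator G)) borel" by measurable
  have "(\<integral>\<^sup>+x. f x \<partial>\<beta>G h G) = (\<integral>\<^sup>+pq. f (\<Phi> h pq) \<partial>density \<beta>0 (indicator G))"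
    unfolding \<beta>G_def by (rule nn_integral_distr[OF m]) simp
  also have "\<dots> = (\<integral>\<^sup>+pq. indicator G pq * f (\<Phi> h pq) \<partial>\<beta>0)"
    by (subst nn_integral_density) auto
  finally show ?thesis .
qed

lemma emeasure_betaG:
  assumes [measurable]: "G \<in> sets borel" "A \<in> sets borel"
  shows "emeasure (\<beta>G h G) A = (\<integral>\<^sup>+pq. indicator G pq * indicator A (\<Phi> h pq) \<partial>\<beta>0)"
proof -
  have "emeasure (\<beta>G h G) A = (\<integral>\<^sup>+x. indicator A x \<partial>\<beta>G h G)"
    by (subst nn_integral_indicator) (auto simp: sets_betaG)
  also have "\<dots> = (\<integral>\<^sup>+pq. indicator G pq * indicator A (\<Phi> h pq) \<partial>\<beta>0)"
    by (rule nn_betaG) auto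
  finally show ?thesis .
qed

lemma nn_marg1_betaG:
  assumes [measurable]: "G \<in> sets borel" "f \<in> borel_measurable borel"
  shows "(\<integral>\<^sup>+x. f x \<partial>marg1 (\<beta>G h G)) = (\<integral>\<^sup>+pq. indicator G pq * f (T h (fst pq)) \<partial>\<beta>0)"
proof -
  have m: "fst \<in> measurable (\<beta>G h G) borel"
    by (simp add: measurable_cong_sets[OF sets_betaG refl])
  have "(\<integral>\<^sup>+x. f x \<partial>marg1 (\<beta>G h G)) = (\<integral>\<^sup>+pq. f (fst pq) \<partial>\<beta>G h G)"
    unfolding marg1_def by (rule nn_integral_distr[OF m]) simp
  also have "\<dots> = (\<integral>\<^sup>+pq. indicator G pq * f (T h (fst pq)) \<partial>\<beta>0)"
    by (subst nn_betaG) (auto simp: \<Phi>_def)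
  finally show ?thesis .
qed

lemma nn_marg2_betaG:
  assumes [measurable]: "G \<in> sets borel" "f \<in> borel_measurable borel"
  shows "(\<integral>\<^sup>+x. f x \<partial>marg2 (\<beta>G h G)) = (\<integral>\<^sup>+pq. indicator G pq * f (snd pq) \<partial>\<beta>0)"
proof -
  have m: "snd \<in> measurable (\<beta>G h G) borel"
    by (simp add: measurable_cong_sets[OF sets_betaG refl])
  have "(\<integral>\<^sup>+x. f x \<partial>marg2 (\<beta>G h G)) = (\<integral>\<^sup>+pq. f (snd pq) \<partial>\<beta>G h G)"
    unfolding marg2_def by (rule nn_integral_distr[OF m]) simp
  also have "\<dots> = (\<integral>\<^sup>+pq. indicator G pq * f (snd pq) \<partial>\<beta>0)"
    by (subst nn_betaG) (auto simp: \<Phi>_def)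
  finally show ?thesis .
qed

lemma sets_marg1[simp]: "sets (marg1 \<beta>) = sets borel" by (simp add: marg1_def)
lemma sets_marg2[simp]: "sets (marg2 \<beta>) = sets borel" by (simp add: marg2_def)
lemma space_marg1[simp]: "space (marg1 \<beta>) = UNIV" by (simp add: marg1_def)
lemma space_marg2[simp]: "space (marg2 \<beta>) = UNIV" by (simp add: marg2_def)

lemma one_hR_sq: "(1 + h * Rx x)\<^sup>2 \<le> (1 + \<bar>h\<bar> * BR)\<^sup>2"
proof -
  have "\<bar>h * Rx x\<bar> \<le> \<bar>h\<bar> * BR" using BR(2)[of x] by (simp add: abs_mult mult_left_mono)
  moreover have "\<bar>1 + h * Rx x\<bar> \<le> 1 + \<bar>h * Rx x\<bar>" using abs_triangle_ineq[of 1 "h * Rx x"] by simp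
  moreover have "0 \<le> 1 + \<bar>h\<bar> * BR" using BR(1) by simp
  ultimately have "\<bar>1 + h * Rx x\<bar> \<le> \<bar>1 + \<bar>h\<bar> * BR\<bar>" by linarith
  then show ?thesis using abs_le_square_iff by blast
qed

lemma T_snd_sq: "(snd (T h p))\<^sup>2 \<le> (1 + \<bar>h\<bar> * BR)\<^sup>2 * (snd p)\<^sup>2"
proof -
  have "(1 + h * Rx (fst p))\<^sup>2 \<le> (1 + \<bar>h\<bar> * BR)\<^sup>2"
    by (rule one_hR_sq)
  then show ?thesis
    by (auto simp: T_def power_mult_distrib mult.commute intro: mult_left_mono)
qed

end


lemma nn_fin: assumes "integrable M f" "\<And>x. 0 \<le> f x" shows "(\<integral>\<^sup>+x. ennreal (f x) \<partial>M) < top"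
proof -
  have "(\<integral>\<^sup>+x. ennreal (norm (f x)) \<partial>M) < \<infinity>" using assms(1) by (simp add: integrable_iff_bounded)
  moreover have "\<And>x. norm (f x) = f x" using assms(2) by simp
  ultimately show ?thesis by (simp add: infinity_ennreal_def)
qed

context HKP begin

lemma fb0: "emeasure \<beta>0 UNIV < top"
  using adm0 by (simp add: HK_admissible_def)

lemma null_b0: "emeasure \<beta>0 (UNIV - CS \<times> CS) = 0"
  using adm0 unfolding HK_admissible_def CS_def by simp

lemma fin_c1: "0 \<le> c \<Longrightarrow> (\<integral>\<^sup>+pq. ennreal (c * (snd (fst pq))\<^sup>2) \<partial>\<beta>0) < top"
  by (rule nn_fin) (use int_r1 in auto)
lemma fin_c2: "0 \<le> c \<Longrightarrow> (\<integral>\<^sup>+pq. ennreal (c * (snd (snd pq))\<^sup>2) \<partial>\<beta>0) < top"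
  by (rule nn_fin) (use int_r2 in auto)

lemma emeasure_marg1_betaG:
  assumes [measurable]: "G \<in> sets borel" "A \<in> sets borel"
  shows "emeasure (marg1 (\<beta>G h G)) A = (\<integral>\<^sup>+pq. indicator G pq * indicator A (T h (fst pq)) \<partial>\<beta>0)"
proof -
  have "emeasure (marg1 (\<beta>G h G)) A = (\<integral>\<^sup>+x. indicator A x \<partial>marg1 (\<beta>G h G))"
    by (subst nn_integral_indicator) auto
  also have "\<dots> = (\<integral>\<^sup>+pq. indicator G pq * indicator A (T h (fst pq)) \<partial>\<beta>0)" by (rule nn_marg1_betaG) auto
  finally show ?thesis .
qed

lemma emeasure_marg2_betaG:
  assumes [measurable]: "G \<in> sets borel" "A \<in> sets borel"
  shows "emeasure (marg2 (\<beta>G h G)) A = (\<integral>\<^sup>+pq. indicator G pq * indicator A (snd pq) \<partial>\<beta>0)"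
proof -
  have "emeasure (marg2 (\<beta>G h G)) A = (\<integral>\<^sup>+x. indicator A x \<partial>marg2 (\<beta>G h G))"
    by (subst nn_integral_indicator) auto
  also have "\<dots> = (\<integral>\<^sup>+pq. indicator G pq * indicator A (snd pq) \<partial>\<beta>0)" by (rule nn_marg2_betaG) auto
  finally show ?thesis .
qed

lemma indG_le: "(indicator G x :: ennreal) * y \<le> y"
  by (cases "x \<in> G") auto

lemma adm_betaG:
  assumes h: "h \<in> N" and G[measurable]: "G \<in> sets borel"
  shows "HK_admissible \<Lambda> \<Sigma> X xbar (\<nu> h) \<mu> (\<beta>G h G)"
proof -
  have CSc[measurable]: "UNIV - CS \<in> sets borel" using sets.compl_sets[OF CS_sets] by simp
  have CC[measurable]: "UNIV - CS \<times> CS \<in> sets borel" using sets.compl_sets[OF CSCS_sets] by simp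
  have a1: "emeasure (\<beta>G h G) (space (\<beta>G h G)) < \<infinity>"
  proof -
    have "emeasure (\<beta>G h G) (space (\<beta>G h G)) = (\<integral>\<^sup>+pq. indicator G pq * indicator UNIV (\<Phi> h pq) \<partial>\<beta>0)"
      by (simp add: emeasure_betaG)
    also have "\<dots> \<le> (\<integral>\<^sup>+pq. 1 \<partial>\<beta>0)"
      by (intro nn_integral_mono) (simp add: indicator_def)
    also have "\<dots> < \<infinity>" using fb0 by (simp add: infinity_ennreal_def)
    finally show ?thesis .
  qed
  have a2: "emeasure (\<beta>G h G) (space (\<beta>G h G) - CS \<times> CS) = 0"
  proof -
    have "emeasure (\<beta>G h G) (space (\<beta>G h G) - CS \<times> CS) = (\<integral>\<^sup>+pq. indicator G pq * indicator (UNIV - CS \<times> CS) (\<Phi> h pq) \<partial>\<beta>0)"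
      by (simp add: emeasure_betaG)
    also have "\<dots> \<le> (\<integral>\<^sup>+pq. indicator (UNIV - CS \<times> CS) pq \<partial>\<beta>0)"
    proof (intro nn_integral_mono)
      fix pq :: "('a \<times> real) \<times> ('a \<times> real)"
      have "T h (fst pq) \<in> CS" by (rule T_CS[OF h])
      then have le: "indicator (UNIV - CS \<times> CS) (\<Phi> h pq) \<le> (indicator (UNIV - CS \<times> CS) pq :: ennreal)"
        by (cases pq) (auto simp: \<Phi>_def indicator_def)
      show "indicator G pq * indicator (UNIV - CS \<times> CS) (\<Phi> h pq) \<le> (indicator (UNIV - CS \<times> CS) pq :: ennreal)"
        by (rule order_trans[OF indG_le le])
    qed
    also have "\<dots> = 0" using null_b0 by (simp add: sets_b0)
    finally show ?thesis by simp
  qed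
  have a3: "cone_M2 \<Lambda> \<Sigma> X xbar (marg1 (\<beta>G h G))"
  proof -
    have "emeasure (marg1 (\<beta>G h G)) UNIV = (\<integral>\<^sup>+pq. indicator G pq * indicator UNIV (T h (fst pq)) \<partial>\<beta>0)"
      by (simp add: emeasure_marg1_betaG)
    also have "\<dots> \<le> (\<integral>\<^sup>+pq. 1 \<partial>\<beta>0)"
      by (intro nn_integral_mono) (simp add: indicator_def)
    also have "\<dots> < \<infinity>" using fb0 by (simp add: infinity_ennreal_def)
    finally have f: "emeasure (marg1 (\<beta>G h G)) UNIV < \<infinity>" .
    have "emeasure (marg1 (\<beta>G h G)) (UNIV - CS) = (\<integral>\<^sup>+pq. indicator G pq * indicator (UNIV - CS) (T h (fst pq)) \<partial>\<beta>0)"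
      by (simp add: emeasure_marg1_betaG)
    also have "\<dots> = (\<integral>\<^sup>+pq. 0 \<partial>\<beta>0)"
      by (intro nn_integral_cong) (simp add: T_CS[OF h])
    finally have n: "emeasure (marg1 (\<beta>G h G)) (UNIV - CS) = 0" by simp
    have "(\<integral>\<^sup>+p. ennreal (cone_d2 \<Lambda> \<Sigma> p (cone_vertex xbar)) \<partial>marg1 (\<beta>G h G))
        = (\<integral>\<^sup>+pq. indicator G pq * ennreal (4 / \<Sigma> * (snd (T h (fst pq)))\<^sup>2) \<partial>\<beta>0)"
      unfolding d2_vtx by (rule nn_marg1_betaG) auto
    also have "\<dots> \<le> (\<integral>\<^sup>+pq. ennreal ((1 + \<bar>h\<bar> * BR)\<^sup>2 * 4 / \<Sigma> * (snd (fst pq))\<^sup>2) \<partial>\<beta>0)"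
    proof (intro nn_integral_mono)
      fix pq :: "('a \<times> real) \<times> ('a \<times> real)"
      have "4 / \<Sigma> * (snd (T h (fst pq)))\<^sup>2 \<le> 4 / \<Sigma> * ((1 + \<bar>h\<bar> * BR)\<^sup>2 * (snd (fst pq))\<^sup>2)"
        using Spos T_snd_sq[of h "fst pq"] by (intro mult_left_mono) auto
      then have le: "ennreal (4 / \<Sigma> * (snd (T h (fst pq)))\<^sup>2) \<le> ennreal ((1 + \<bar>h\<bar> * BR)\<^sup>2 * 4 / \<Sigma> * (snd (fst pq))\<^sup>2)"
        by (intro ennreal_leI) (simp add: algebra_simps)
      show "indicator G pq * ennreal (4 / \<Sigma> * (snd (T h (fst pq)))\<^sup>2) \<le> ennreal ((1 + \<bar>h\<bar> * BR)\<^sup>2 * 4 / \<Sigma> * (snd (fst pq))\<^sup>2)"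
        by (rule order_trans[OF indG_le le])
    qed
    also have "\<dots> < \<infinity>"
      using fin_c1[of "(1 + \<bar>h\<bar> * BR)\<^sup>2 * 4 / \<Sigma>"] Spos by (simp add: infinity_ennreal_def)
    finally have m: "(\<integral>\<^sup>+p. ennreal (cone_d2 \<Lambda> \<Sigma> p (cone_vertex xbar)) \<partial>marg1 (\<beta>G h G)) < \<infinity>" .
    show ?thesis unfolding cone_M2_def using f n m by (simp add: CS_def)
  qed
  have a4: "cone_M2 \<Lambda> \<Sigma> X xbar (marg2 (\<beta>G h G))"
  proof -
    have "emeasure (marg2 (\<beta>G h G)) UNIV = (\<integral>\<^sup>+pq. indicator G pq * indicator UNIV (snd pq) \<partial>\<beta>0)"
      by (simp add: emeasure_marg2_betaG)
    also have "\<dots> \<le> (\<integral>\<^sup>+pq. 1 \<partial>\<beta>0)"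
      by (intro nn_integral_mono) (simp add: indicator_def)
    also have "\<dots> < \<infinity>" using fb0 by (simp add: infinity_ennreal_def)
    finally have f: "emeasure (marg2 (\<beta>G h G)) UNIV < \<infinity>" .
    have "emeasure (marg2 (\<beta>G h G)) (UNIV - CS) = (\<integral>\<^sup>+pq. indicator G pq * indicator (UNIV - CS) (snd pq) \<partial>\<beta>0)"
      by (simp add: emeasure_marg2_betaG)
    also have "\<dots> \<le> (\<integral>\<^sup>+pq. indicator (UNIV - CS \<times> CS) pq \<partial>\<beta>0)"
    proof (intro nn_integral_mono)
      fix pq :: "('a \<times> real) \<times> ('a \<times> real)"
      have le: "indicator (UNIV - CS) (snd pq) \<le> (indicator (UNIV - CS \<times> CS) pq :: ennreal)"
        by (cases pq) (simp add: indicator_def)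
      show "indicator G pq * indicator (UNIV - CS) (snd pq) \<le> (indicator (UNIV - CS \<times> CS) pq :: ennreal)"
        by (rule order_trans[OF indG_le le])
    qed
    also have "\<dots> = 0" using null_b0 by (simp add: sets_b0)
    finally have n: "emeasure (marg2 (\<beta>G h G)) (UNIV - CS) = 0" by simp
    have "(\<integral>\<^sup>+p. ennreal (cone_d2 \<Lambda> \<Sigma> p (cone_vertex xbar)) \<partial>marg2 (\<beta>G h G))
        = (\<integral>\<^sup>+pq. indicator G pq * ennreal (4 / \<Sigma> * (snd (snd pq))\<^sup>2) \<partial>\<beta>0)"
      unfolding d2_vtx by (rule nn_marg2_betaG) auto
    also have "\<dots> \<le> (\<integral>\<^sup>+pq. ennreal (4 / \<Sigma> * (snd (snd pq))\<^sup>2) \<partial>\<beta>0)"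
      by (intro nn_integral_mono indG_le)
    also have "\<dots> < \<infinity>"
      using fin_c2[of "4 / \<Sigma>"] Spos by (simp add: infinity_ennreal_def)
    finally have m: "(\<integral>\<^sup>+p. ennreal (cone_d2 \<Lambda> \<Sigma> p (cone_vertex xbar)) \<partial>marg2 (\<beta>G h G)) < \<infinity>" .
    show ?thesis unfolding cone_M2_def using f n m by (simp add: CS_def)
  qed
  have a5: "meas_le (hmarg (marg1 (\<beta>G h G))) (\<nu> h)"
    unfolding meas_le_def
  proof
    fix A assume "A \<in> sets (hmarg (marg1 (\<beta>G h G)))"
    then have A[measurable]: "A \<in> sets borel" by simp
    define w where "w x = ennreal (dens h x) * indicator A (x + h *\<^sub>R vx x)" for x
    have wm[measurable]: "w \<in> borel_measurable borel" unfolding w_def[abs_def] by measurable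
    have "emeasure (hmarg (marg1 (\<beta>G h G))) A = (\<integral>\<^sup>+p. ennreal ((snd p)\<^sup>2) * indicator A (fst p) \<partial>marg1 (\<beta>G h G))"
      by (rule emeasure_hmarg) auto
    also have "\<dots> = (\<integral>\<^sup>+pq. indicator G pq * (ennreal ((snd (T h (fst pq)))\<^sup>2) * indicator A (fst (T h (fst pq)))) \<partial>\<beta>0)"
      by (rule nn_marg1_betaG) auto
    also have "\<dots> \<le> (\<integral>\<^sup>+pq. ennreal ((snd (fst pq))\<^sup>2) * w (fst (fst pq)) \<partial>\<beta>0)"
    proof (intro nn_integral_mono)
      fix pq :: "('a \<times> real) \<times> ('a \<times> real)"
      obtain x r where p: "fst pq = (x, r)" by (cases "fst pq")
      have le: "ennreal ((snd (T h (fst pq)))\<^sup>2) * indicator A (fst (T h (fst pq))) \<le> ennreal ((snd (fst pq))\<^sup>2) * w (fst (fst pq))"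
      proof (cases "x \<in> X \<and> 0 < r")
        case True
        then have "T h (fst pq) = (x + h *\<^sub>R vx x, r * (1 + h * Rx x))" by (simp add: T_def p)
        moreover have "dens h x = (1 + h * Rx x)\<^sup>2" using True by (simp add: dens_def)
        ultimately show ?thesis
          by (simp add: p w_def power_mult_distrib ennreal_mult' mult.assoc)
      next
        case False
        then have "T h (fst pq) = (xbar, 0)" by (auto simp: T_def p)
        then show ?thesis by simp
      qed
      show "indicator G pq * (ennreal ((snd (T h (fst pq)))\<^sup>2) * indicator A (fst (T h (fst pq)))) \<le> ennreal ((snd (fst pq))\<^sup>2) * w (fst (fst pq))"
        by (rule order_trans[OF indG_le le])
    qed
    also have "\<dots> = (\<integral>\<^sup>+p. ennreal ((snd p)\<^sup>2) * w (fst p) \<partial>marg1 \<beta>0)"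
      unfolding marg1_b0 by (subst nn_integral_distr) auto
    also have "\<dots> = (\<integral>\<^sup>+x. w x \<partial>hmarg (marg1 \<beta>0))"
      by (rule nn_integral_hmarg[symmetric]) auto
    also have "\<dots> \<le> (\<integral>\<^sup>+x. w x \<partial>\<nu>0)"
    proof (rule nn_integral_mono_measure)
      show "sets (hmarg (marg1 \<beta>0)) = sets \<nu>0" by (simp add: sets_nu0)
      show "hmarg (marg1 \<beta>0) \<le> \<nu>0"
        using adm0 by (intro meas_le_imp_le) (auto simp: HK_admissible_def sets_nu0)
    qed
    also have "\<dots> = emeasure (\<nu> h) A"
      unfolding nu_rho[OF h] by (simp add: emeasure_rho w_def)
    finally show "emeasure (hmarg (marg1 (\<beta>G h G))) A \<le> emeasure (\<nu> h) A" .
  qed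
  have a6: "meas_le (hmarg (marg2 (\<beta>G h G))) \<mu>"
    unfolding meas_le_def
  proof
    fix A assume "A \<in> sets (hmarg (marg2 (\<beta>G h G)))"
    then have A[measurable]: "A \<in> sets borel" by simp
    have "emeasure (hmarg (marg2 (\<beta>G h G))) A = (\<integral>\<^sup>+p. ennreal ((snd p)\<^sup>2) * indicator A (fst p) \<partial>marg2 (\<beta>G h G))"
      by (rule emeasure_hmarg) auto
    also have "\<dots> = (\<integral>\<^sup>+pq. indicator G pq * (ennreal ((snd (snd pq))\<^sup>2) * indicator A (fst (snd pq))) \<partial>\<beta>0)"
      by (rule nn_marg2_betaG) auto
    also have "\<dots> \<le> (\<integral>\<^sup>+pq. ennreal ((snd (snd pq))\<^sup>2) * indicator A (fst (snd pq)) \<partial>\<beta>0)"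
      by (intro nn_integral_mono indG_le)
    also have "\<dots> = (\<integral>\<^sup>+p. ennreal ((snd p)\<^sup>2) * indicator A (fst p) \<partial>marg2 \<beta>0)"
      unfolding marg2_b0 by (subst nn_integral_distr) auto
    also have "\<dots> = emeasure (hmarg (marg2 \<beta>0)) A"
      by (rule emeasure_hmarg[symmetric]) auto
    also have "\<dots> \<le> emeasure \<mu> A"
      using adm0 A by (auto simp: HK_admissible_def meas_le_def)
    finally show "emeasure (hmarg (marg2 (\<beta>G h G))) A \<le> emeasure \<mu> A" .
  qed
  show ?thesis unfolding HK_admissible_def
    using a1 a2 a3 a4 a5 a6 by (simp add: sets_betaG CS_def)
qed

end

context HKP begin

lemma ch_meas[measurable]: "ch h \<in> borel_measurable borel"
  unfolding ch_def[abs_def] by measurable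

lemma g_meas[measurable]: "g h \<in> borel_measurable borel"
  unfolding g_def[abs_def] by measurable

lemma int_sq: "integrable \<beta>0 (\<lambda>pq. (snd (fst pq))\<^sup>2 + (snd (snd pq))\<^sup>2)"
  using int_r1 int_r2 by simp

lemma int_by:
  assumes [measurable]: "f \<in> borel_measurable borel" and b: "\<And>pq. \<bar>f pq\<bar> \<le> c * ((snd (fst pq))\<^sup>2 + (snd (snd pq))\<^sup>2)"
  shows "integrable \<beta>0 f"
proof (rule Bochner_Integration.integrable_bound)
  show "integrable \<beta>0 (\<lambda>pq. c * ((snd (fst pq))\<^sup>2 + (snd (snd pq))\<^sup>2))"
    using int_sq by simp
  show "f \<in> borel_measurable \<beta>0" by simp
  show "AE pq in \<beta>0. norm (f pq) \<le> norm (c * ((snd (fst pq))\<^sup>2 + (snd (snd pq))\<^sup>2))"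
  proof (rule AE_I2)
    fix pq
    have "\<bar>f pq\<bar> \<le> \<bar>c * ((snd (fst pq))\<^sup>2 + (snd (snd pq))\<^sup>2)\<bar>"
      by (rule order_trans[OF b abs_ge_self])
    then show "norm (f pq) \<le> norm (c * ((snd (fst pq))\<^sup>2 + (snd (snd pq))\<^sup>2))" by simp
  qed
qed

lemma r12_le: "\<bar>a * b\<bar> \<le> (a::real)\<^sup>2 + b\<^sup>2"
proof -
  have "0 \<le> (\<bar>a\<bar> - \<bar>b\<bar>)\<^sup>2" by simp
  then have "2 * \<bar>a\<bar> * \<bar>b\<bar> \<le> a\<^sup>2 + b\<^sup>2" by (simp add: power2_diff)
  moreover have "0 \<le> \<bar>a\<bar> * \<bar>b\<bar>" by simp
  ultimately have "\<bar>a\<bar> * \<bar>b\<bar> \<le> a\<^sup>2 + b\<^sup>2" by linarith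
  then show ?thesis by (simp add: abs_mult)
qed

lemma ch_bd: "\<bar>ch h pq\<bar> \<le> 1" by (simp add: ch_def)

lemma g_bd: "\<bar>g h pq\<bar> \<le> (1 + \<bar>h\<bar> * BR) * ((snd (fst pq))\<^sup>2 + (snd (snd pq))\<^sup>2)"
proof -
  have a: "\<bar>1 + h * Rx (fst (fst pq))\<bar> \<le> 1 + \<bar>h\<bar> * BR"
  proof -
    have "\<bar>h * Rx (fst (fst pq))\<bar> \<le> \<bar>h\<bar> * BR" using BR(2) by (simp add: abs_mult mult_left_mono)
    moreover have "\<bar>1 + h * Rx (fst (fst pq))\<bar> \<le> 1 + \<bar>h * Rx (fst (fst pq))\<bar>"
      using abs_triangle_ineq[of 1] by simp
    ultimately show ?thesis by linarith
  qed
  have "\<bar>g h pq\<bar> = \<bar>snd (fst pq) * snd (snd pq)\<bar> * \<bar>1 + h * Rx (fst (fst pq))\<bar> * \<bar>ch h pq\<bar>"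
    by (simp add: g_def abs_mult)
  also have "\<dots> \<le> ((snd (fst pq))\<^sup>2 + (snd (snd pq))\<^sup>2) * (1 + \<bar>h\<bar> * BR) * 1"
    by (intro mult_mono r12_le a ch_bd) (auto intro: add_nonneg_nonneg mult_nonneg_nonneg simp: BR(1))
  finally show ?thesis by (simp add: mult.commute)
qed

lemma int_g: "integrable \<beta>0 (\<lambda>pq. indicator G pq * g h pq)" if [measurable]: "G \<in> sets borel"
proof (rule int_by)
  show "(\<lambda>pq. indicator G pq * g h pq) \<in> borel_measurable borel" by measurable
  fix pq show "\<bar>indicator G pq * g h pq\<bar> \<le> (1 + \<bar>h\<bar> * BR) * ((snd (fst pq))\<^sup>2 + (snd (snd pq))\<^sup>2)"
    using g_bd[of h pq] by (cases "pq \<in> G") auto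
qed

lemma int_T1: "integrable \<beta>0 (\<lambda>pq. indicator G pq * (snd (T h (fst pq)))\<^sup>2)" if [measurable]: "G \<in> sets borel"
proof (rule int_by)
  show "(\<lambda>pq. indicator G pq * (snd (T h (fst pq)))\<^sup>2) \<in> borel_measurable borel" by measurable
  fix pq show "\<bar>indicator G pq * (snd (T h (fst pq)))\<^sup>2\<bar> \<le> (1 + \<bar>h\<bar> * BR)\<^sup>2 * ((snd (fst pq))\<^sup>2 + (snd (snd pq))\<^sup>2)"
    using T_snd_sq[of h "fst pq"] by (cases "pq \<in> G") (auto intro: order_trans simp: algebra_simps)
qed

lemma int_T2: "integrable \<beta>0 (\<lambda>pq. indicator G pq * (snd (snd pq))\<^sup>2)" if [measurable]: "G \<in> sets borel"
proof (rule int_by)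
  show "(\<lambda>pq. indicator G pq * (snd (snd pq))\<^sup>2) \<in> borel_measurable borel" by measurable
  fix pq show "\<bar>indicator G pq * (snd (snd pq))\<^sup>2\<bar> \<le> 1 * ((snd (fst pq))\<^sup>2 + (snd (snd pq))\<^sup>2)"
    by (cases "pq \<in> G") auto
qed

end

context HKP begin

lemma betaG_alt: "\<beta>G h G = distr (density \<beta>0 (\<lambda>pq. ennreal (indicator G pq))) borel (\<Phi> h)"
  by (simp add: \<beta>G_def ennreal_indicator)

lemma int_d2_betaG:
  assumes [measurable]: "G \<in> sets borel"
  shows "(\<integral>pq. cone_d2 \<Lambda> \<Sigma> (fst pq) (snd pq) \<partial>\<beta>G h G)
     = (\<integral>pq. indicator G pq * cone_d2 \<Lambda> \<Sigma> (T h (fst pq)) (snd pq) \<partial>\<beta>0)"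
proof -
  have cm: "(\<lambda>pq. cone_d2 \<Lambda> \<Sigma> (fst pq) (snd pq)) \<in> borel_measurable (borel :: (('a \<times> real) \<times> ('a \<times> real)) measure)"
    unfolding cone_d2_def by measurable
  have m: "\<Phi> h \<in> measurable (density \<beta>0 (\<lambda>pq. ennreal (indicator G pq))) borel" by measurable
  have "(\<integral>pq. cone_d2 \<Lambda> \<Sigma> (fst pq) (snd pq) \<partial>\<beta>G h G)
      = (\<integral>pq. cone_d2 \<Lambda> \<Sigma> (fst (\<Phi> h pq)) (snd (\<Phi> h pq)) \<partial>density \<beta>0 (\<lambda>pq. ennreal (indicator G pq)))"
    unfolding betaG_alt by (rule integral_distr[OF m cm])
  also have "\<dots> = (\<integral>pq. indicator G pq *\<^sub>R cone_d2 \<Lambda> \<Sigma> (fst (\<Phi> h pq)) (snd (\<Phi> h pq)) \<partial>\<beta>0)"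
    by (rule integral_density) (use cm in auto)
  finally show ?thesis by (simp add: \<Phi>_def)
qed

lemma measure_hmarg1_betaG:
  assumes [measurable]: "G \<in> sets borel"
  shows "measure (hmarg (marg1 (\<beta>G h G))) (space (hmarg (marg1 (\<beta>G h G))))
     = (\<integral>pq. indicator G pq * (snd (T h (fst pq)))\<^sup>2 \<partial>\<beta>0)"
proof -
  have "emeasure (hmarg (marg1 (\<beta>G h G))) UNIV = (\<integral>\<^sup>+p. ennreal ((snd p)\<^sup>2) * indicator UNIV (fst p) \<partial>marg1 (\<beta>G h G))"
    by (rule emeasure_hmarg) auto
  also have "\<dots> = (\<integral>\<^sup>+pq. indicator G pq * (ennreal ((snd (T h (fst pq)))\<^sup>2) * indicator UNIV (fst (T h (fst pq)))) \<partial>\<beta>0)"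
    by (rule nn_marg1_betaG) auto
  also have "\<dots> = (\<integral>\<^sup>+pq. ennreal (indicator G pq * (snd (T h (fst pq)))\<^sup>2) \<partial>\<beta>0)"
    by (intro nn_integral_cong) (simp add: ennreal_mult' ennreal_indicator)
  finally have e: "emeasure (hmarg (marg1 (\<beta>G h G))) UNIV = (\<integral>\<^sup>+pq. ennreal (indicator G pq * (snd (T h (fst pq)))\<^sup>2) \<partial>\<beta>0)" .
  show ?thesis unfolding measure_def space_hmarg e
    by (rule enn2real_nn_integral_eq_integral) auto
qed

lemma measure_hmarg2_betaG:
  assumes [measurable]: "G \<in> sets borel"
  shows "measure (hmarg (marg2 (\<beta>G h G))) (space (hmarg (marg2 (\<beta>G h G))))
     = (\<integral>pq. indicator G pq * (snd (snd pq))\<^sup>2 \<partial>\<beta>0)"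
proof -
  have "emeasure (hmarg (marg2 (\<beta>G h G))) UNIV = (\<integral>\<^sup>+p. ennreal ((snd p)\<^sup>2) * indicator UNIV (fst p) \<partial>marg2 (\<beta>G h G))"
    by (rule emeasure_hmarg) auto
  also have "\<dots> = (\<integral>\<^sup>+pq. indicator G pq * (ennreal ((snd (snd pq))\<^sup>2) * indicator UNIV (fst (snd pq))) \<partial>\<beta>0)"
    by (rule nn_marg2_betaG) auto
  also have "\<dots> = (\<integral>\<^sup>+pq. ennreal (indicator G pq * (snd (snd pq))\<^sup>2) \<partial>\<beta>0)"
    by (intro nn_integral_cong) (simp add: ennreal_mult' ennreal_indicator)
  finally have e: "emeasure (hmarg (marg2 (\<beta>G h G))) UNIV = (\<integral>\<^sup>+pq. ennreal (indicator G pq * (snd (snd pq))\<^sup>2) \<partial>\<beta>0)" .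
  show ?thesis unfolding measure_def space_hmarg e
    by (rule enn2real_nn_integral_eq_integral) auto
qed

lemma measure_nuh:
  assumes h: "h \<in> N" shows "measure (\<nu> h) (space (\<nu> h)) = mnu h"
proof -
  have s: "sets (\<nu> h) = sets borel" and f: "emeasure (\<nu> h) (space (\<nu> h)) < \<infinity>"
    and n: "emeasure (\<nu> h) (space (\<nu> h) - X) = 0"
    using nuh[OF h] by (auto simp: meas_on_def)
  have sp: "space (\<nu> h) = UNIV" using sets_eq_imp_space_eq[OF s] by simp
  interpret F: finite_measure "\<nu> h" by (rule finite_measureI) (use f in auto)
  have "(\<integral>x \<in> X. (1::real) \<partial>\<nu> h) = (\<integral>x \<in> X. 1 * (1 + h * R x)\<^sup>2 \<partial>\<nu>0)"
  proof -
    have b: "bounded ((\<lambda>_::'a. 1::real) ` X)" by (rule boundedI[where B=1]) auto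
    show ?thesis using nueq[OF h _ b] by simp
  qed
  also have "\<dots> = mnu h" unfolding mnu_def set_lebesgue_integral_def
    by (intro Bochner_Integration.integral_cong) (auto simp: Rx_def indicator_def)
  finally have e: "(\<integral>x \<in> X. (1::real) \<partial>\<nu> h) = mnu h" .
  have "(\<integral>x \<in> X. (1::real) \<partial>\<nu> h) = measure (\<nu> h) X"
    using s by (subst set_integral_const) auto
  also have "\<dots> = measure (\<nu> h) UNIV"
  proof -
    have "measure (\<nu> h) (UNIV - X) = 0" using n sp by (simp add: measure_def)
    moreover have "measure (\<nu> h) UNIV = measure (\<nu> h) X + measure (\<nu> h) (UNIV - X)"
      using s F.finite_measure_Union[of X "UNIV - X"] by (simp add: Un_absorb1 sets.compl_sets)
    ultimately show ?thesis by simp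
  qed
  finally show ?thesis using e sp by simp
qed

lemma d2_T:
  assumes "pq \<in> CS \<times> CS"
  shows "cone_d2 \<Lambda> \<Sigma> (T h (fst pq)) (snd pq)
    = 4 / \<Sigma> * (snd (T h (fst pq)))\<^sup>2 + 4 / \<Sigma> * (snd (snd pq))\<^sup>2 - 8 / \<Sigma> * g h pq"
proof -
  obtain x1 r1 x2 r2 where pq: "pq = ((x1, r1), (x2, r2))" by (cases pq) auto
  show ?thesis
  proof (cases "x1 \<in> X \<and> 0 < r1")
    case True
    then have T: "T h (fst pq) = (x1 + h *\<^sub>R vx x1, r1 * (1 + h * Rx x1))" by (simp add: T_def pq)
    show ?thesis unfolding T by (simp add: pq cone_d2_def g_def ch_def k_def algebra_simps power2_eq_square)
  next
    case False
    then have "r1 = 0" using assms by (auto simp: pq CS_def cone_set_def)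
    moreover have "T h (fst pq) = (xbar, 0)" using False by (auto simp: T_def pq)
    ultimately show ?thesis by (simp add: pq cone_d2_def g_def)
  qed
qed

lemma cost_betaG:
  assumes h: "h \<in> N" and G[measurable]: "G \<in> sets borel"
  shows "HK_cost \<Lambda> \<Sigma> (\<nu> h) \<mu> (\<beta>G h G) = Cost h G"
proof -
  let ?M1 = "\<integral>pq. indicator G pq * (snd (T h (fst pq)))\<^sup>2 \<partial>\<beta>0"
  let ?M2 = "\<integral>pq. indicator G pq * (snd (snd pq))\<^sup>2 \<partial>\<beta>0"
  let ?Ig = "\<integral>pq. indicator G pq * g h pq \<partial>\<beta>0"
  have "(\<integral>pq. indicator G pq * cone_d2 \<Lambda> \<Sigma> (T h (fst pq)) (snd pq) \<partial>\<beta>0)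
      = (\<integral>pq. 4 / \<Sigma> * (indicator G pq * (snd (T h (fst pq)))\<^sup>2) + 4 / \<Sigma> * (indicator G pq * (snd (snd pq))\<^sup>2)
           - 8 / \<Sigma> * (indicator G pq * g h pq) \<partial>\<beta>0)"
  proof (rule integral_cong_AE)
    show "(\<lambda>pq. indicator G pq * cone_d2 \<Lambda> \<Sigma> (T h (fst pq)) (snd pq)) \<in> borel_measurable \<beta>0"
      unfolding cone_d2_def by measurable
    show "(\<lambda>pq. 4 / \<Sigma> * (indicator G pq * (snd (T h (fst pq)))\<^sup>2) + 4 / \<Sigma> * (indicator G pq * (snd (snd pq))\<^sup>2)
           - 8 / \<Sigma> * (indicator G pq * g h pq)) \<in> borel_measurable \<beta>0" by measurable
    show "AE pq in \<beta>0. indicator G pq * cone_d2 \<Lambda> \<Sigma> (T h (fst pq)) (snd pq)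
      = 4 / \<Sigma> * (indicator G pq * (snd (T h (fst pq)))\<^sup>2) + 4 / \<Sigma> * (indicator G pq * (snd (snd pq))\<^sup>2)
           - 8 / \<Sigma> * (indicator G pq * g h pq)"
      using AE_CS by eventually_elim (simp add: d2_T algebra_simps)
  qed
  also have "\<dots> = 4 / \<Sigma> * ?M1 + 4 / \<Sigma> * ?M2 - 8 / \<Sigma> * ?Ig"
    using int_T1[OF G, of h] int_T2[OF G] int_g[OF G, of h] by simp
  finally have I1: "(\<integral>pq. cone_d2 \<Lambda> \<Sigma> (fst pq) (snd pq) \<partial>\<beta>G h G) = 4 / \<Sigma> * ?M1 + 4 / \<Sigma> * ?M2 - 8 / \<Sigma> * ?Ig"
    using int_d2_betaG[OF G, of h] by simp
  show ?thesis unfolding HK_cost_def I1 measure_hmarg1_betaG[OF G] measure_hmarg2_betaG[OF G] measure_nuh[OF h]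
    by (simp add: Cost_def mmu_def algebra_simps)
qed

end

context HKP begin

lemma betaG_0: "\<beta>G 0 UNIV = \<beta>0"
proof -
  have d: "density \<beta>0 (indicator UNIV) = \<beta>0"
    using density_1[of \<beta>0] by (simp add: indicator_def[abs_def])
  have "distr \<beta>0 borel (\<Phi> 0) = distr \<beta>0 borel (\<lambda>x. x)"
  proof (rule distr_cong_AE)
    show "AE x in \<beta>0. \<Phi> 0 x = x"
      using AE_CS by eventually_elim (auto simp: \<Phi>_def T0)
  qed (auto simp: measurable_cong_sets[OF sets_b0 refl])
  also have "\<dots> = \<beta>0" by (rule distr_id2) (simp add: sets_b0)
  finally show ?thesis unfolding \<beta>G_def d .
qed

lemma cost_b0: "HK_cost \<Lambda> \<Sigma> \<nu>0 \<mu> \<beta>0 = Cost 0 UNIV"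
  using cost_betaG[OF zero_N, of UNIV] by (simp add: betaG_0 nu_0)

lemma cost_nonneg:
  assumes "HK_admissible \<Lambda> \<Sigma> X xbar M1 M2 \<beta>" "meas_on X M1" "meas_on X M2"
  shows "0 \<le> HK_cost \<Lambda> \<Sigma> M1 M2 \<beta>"
proof -
  have i: "0 \<le> (\<integral>pq. cone_d2 \<Lambda> \<Sigma> (fst pq) (snd pq) \<partial>\<beta>)"
    by (rule integral_nonneg_AE) (simp add: d2_nonneg[OF Spos])
  have m: "measure (hmarg \<alpha>) (space (hmarg \<alpha>)) \<le> measure M (space M)"
    if "meas_le (hmarg \<alpha>) M" "meas_on X M" for \<alpha> and M :: "'a measure"
  proof -
    have sM: "sets M = sets borel" and fM: "emeasure M (space M) < \<infinity>" using that(2) by (auto simp: meas_on_def)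
    have sp: "space M = UNIV" using sets_eq_imp_space_eq[OF sM] by simp
    have "emeasure (hmarg \<alpha>) UNIV \<le> emeasure M UNIV" using that(1) by (auto simp: meas_le_def)
    moreover have "emeasure M UNIV < top" using fM sp by (simp add: infinity_ennreal_def)
    ultimately show ?thesis unfolding measure_def using sp by (simp add: enn2real_mono)
  qed
  have "measure (hmarg (marg1 \<beta>)) (space (hmarg (marg1 \<beta>))) \<le> measure M1 (space M1)"
    using assms by (intro m) (auto simp: HK_admissible_def)
  moreover have "measure (hmarg (marg2 \<beta>)) (space (hmarg (marg2 \<beta>))) \<le> measure M2 (space M2)"
    using assms by (intro m) (auto simp: HK_admissible_def)
  ultimately show ?thesis using i Spos unfolding HK_cost_def
    by (intro add_nonneg_nonneg mult_nonneg_nonneg) auto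
qed

lemma HK2_le: assumes h: "h \<in> N" shows "HK2 \<Lambda> \<Sigma> X xbar (\<nu> h) \<mu> \<le> Cost h UNIV"
proof -
  have "HK2 \<Lambda> \<Sigma> X xbar (\<nu> h) \<mu> \<le> HK_cost \<Lambda> \<Sigma> (\<nu> h) \<mu> (\<beta>G h UNIV)"
    unfolding HK2_def
  proof (rule cInf_lower)
    show "HK_cost \<Lambda> \<Sigma> (\<nu> h) \<mu> (\<beta>G h UNIV) \<in> HK_cost \<Lambda> \<Sigma> (\<nu> h) \<mu> ` {\<beta>. HK_admissible \<Lambda> \<Sigma> X xbar (\<nu> h) \<mu> \<beta>}"
      using adm_betaG[OF h, of UNIV] by auto
    show "bdd_below (HK_cost \<Lambda> \<Sigma> (\<nu> h) \<mu> ` {\<beta>. HK_admissible \<Lambda> \<Sigma> X xbar (\<nu> h) \<mu> \<beta>})"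
      using cost_nonneg nuh[OF h] muX by (intro bdd_belowI[where m=0]) auto
  qed
  then show ?thesis using cost_betaG[OF h, of UNIV] by simp
qed

lemma HK2_ge: "Cost 0 UNIV \<le> HK2 \<Lambda> \<Sigma> X xbar (\<nu> 0) \<mu>"
  unfolding HK2_def nu_0
proof (rule cInf_greatest)
  show "HK_cost \<Lambda> \<Sigma> \<nu>0 \<mu> ` {\<beta>. HK_admissible \<Lambda> \<Sigma> X xbar \<nu>0 \<mu> \<beta>} \<noteq> {}"
    using adm0 by auto
  fix c assume "c \<in> HK_cost \<Lambda> \<Sigma> \<nu>0 \<mu> ` {\<beta>. HK_admissible \<Lambda> \<Sigma> X xbar \<nu>0 \<mu> \<beta>}"
  then show "Cost 0 UNIV \<le> c" using opt cost_b0 by (auto simp: HK_optimal_def)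
qed

lemma g0_nonneg: "AE pq in \<beta>0. 0 \<le> g 0 pq"
proof -
  define G where "G = {pq. 0 \<le> g 0 pq}"
  have G[measurable]: "G \<in> sets borel" unfolding G_def by measurable
  have "Cost 0 UNIV \<le> HK_cost \<Lambda> \<Sigma> \<nu>0 \<mu> (\<beta>G 0 G)"
    using opt adm_betaG[OF zero_N G] cost_b0 nu_0 by (auto simp: HK_optimal_def)
  also have "\<dots> = Cost 0 G" using cost_betaG[OF zero_N G] nu_0 by simp
  finally have "Cost 0 UNIV \<le> Cost 0 G" .
  then have le: "(\<integral>pq. indicator G pq * g 0 pq \<partial>\<beta>0) \<le> (\<integral>pq. g 0 pq \<partial>\<beta>0)"
    using Spos by (simp add: Cost_def divide_le_cancel)
  have ig: "integrable \<beta>0 (g 0)" using int_g[of UNIV 0] by simp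
  have ig2: "integrable \<beta>0 (\<lambda>pq. indicator G pq * g 0 pq)" using int_g[OF G, of 0] .
  define f where "f pq = - (indicator (UNIV - G) pq * g 0 pq)" for pq
  have fe: "f pq = indicator G pq * g 0 pq - g 0 pq" for pq
    by (auto simp: f_def indicator_def)
  have fi: "integrable \<beta>0 f" unfolding fe[abs_def] using ig ig2 by simp
  have fnn: "AE pq in \<beta>0. 0 \<le> f pq" by (auto simp: f_def G_def indicator_def)
  have "(\<integral>pq. f pq \<partial>\<beta>0) \<le> 0" unfolding fe using ig ig2 le by simp
  moreover have "0 \<le> (\<integral>pq. f pq \<partial>\<beta>0)" using fnn by (rule integral_nonneg_AE)
  ultimately have "(\<integral>pq. f pq \<partial>\<beta>0) = 0" by simp
  then have "AE pq in \<beta>0. f pq = 0" using integral_nonneg_eq_0_iff_AE[OF fi fnn] by simp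
  then show ?thesis by eventually_elim (auto simp: f_def G_def indicator_def split: if_splits)
qed

end


lemma cos_lip: "\<bar>cos a - cos b\<bar> \<le> \<bar>a - (b::real)\<bar>"
proof -
  have "\<bar>cos a - cos b\<bar> = 2 * \<bar>sin ((a + b) / 2)\<bar> * \<bar>sin ((b - a) / 2)\<bar>"
    by (simp add: cos_diff_cos abs_mult)
  also have "\<dots> \<le> 2 * 1 * \<bar>(b - a) / 2\<bar>"
    by (intro mult_mono abs_sin_x_le_abs_x) auto
  finally show ?thesis by simp
qed

lemma one_minus_cos: "0 \<le> 1 - cos y \<and> 1 - cos y \<le> (y::real)\<^sup>2 / 2"
proof -
  have c: "cos y = 1 - 2 * (sin (y / 2))\<^sup>2" using cos_double_sin[of "y / 2"] by simp
  have "(sin (y / 2))\<^sup>2 \<le> (y / 2)\<^sup>2"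
    using abs_sin_x_le_abs_x[of "y / 2"] by (metis abs_le_square_iff)
  then show ?thesis unfolding c by (simp add: power_divide)
qed

lemma min_lip: "\<bar>min a (c::real) - min b c\<bar> \<le> \<bar>a - b\<bar>"
  by (simp add: min_def abs_if)

context HKP begin

lemma k_nonneg: "0 \<le> k" using Spos Lpos by (simp add: k_def)

lemma ch_alt: "ch t pq = cos (min (k * norm ((fst (fst pq) - fst (snd pq)) + t *\<^sub>R vx (fst (fst pq)))) pi)"
  by (simp add: ch_def algebra_simps)

lemma ch_lip: "\<bar>ch t pq - ch 0 pq\<bar> \<le> k * \<bar>t\<bar> * BV"
proof -
  let ?w = "fst (fst pq) - fst (snd pq)" and ?u = "vx (fst (fst pq))"
  have "\<bar>ch t pq - ch 0 pq\<bar> \<le> \<bar>min (k * norm (?w + t *\<^sub>R ?u)) pi - min (k * norm ?w) pi\<bar>"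
    unfolding ch_alt by (simp add: cos_lip)
  also have "\<dots> \<le> \<bar>k * norm (?w + t *\<^sub>R ?u) - k * norm ?w\<bar>" by (rule min_lip)
  also have "\<dots> = k * \<bar>norm (?w + t *\<^sub>R ?u) - norm ?w\<bar>"
    using k_nonneg by (simp add: abs_mult right_diff_distrib[symmetric])
  also have "\<dots> \<le> k * norm (t *\<^sub>R ?u)"
    using k_nonneg norm_triangle_ineq3[of "?w + t *\<^sub>R ?u" ?w] by (intro mult_left_mono) auto
  also have "\<dots> \<le> k * (\<bar>t\<bar> * BV)"
    using k_nonneg BV(2)[of "fst (fst pq)"] by (intro mult_left_mono) (auto intro: mult_left_mono)
  finally show ?thesis by (simp add: mult.assoc)
qed

lemma ch_cont: "((\<lambda>t. ch t pq) \<longlongrightarrow> ch 0 pq) (at 0)"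
proof -
  have "((\<lambda>t. ch t pq - ch 0 pq) \<longlongrightarrow> 0) (at 0)"
  proof (rule Lim_null_comparison)
    show "\<forall>\<^sub>F t in at 0. norm (ch t pq - ch 0 pq) \<le> k * \<bar>t\<bar> * BV"
      using ch_lip by (intro always_eventually) auto
    have "((\<lambda>t::real. k * \<bar>t\<bar> * BV) \<longlongrightarrow> k * \<bar>0\<bar> * BV) (at 0)"
      by (intro tendsto_intros)
    then show "((\<lambda>t::real. k * \<bar>t\<bar> * BV) \<longlongrightarrow> 0) (at 0)" by simp
  qed
  then show ?thesis by (simp add: LIM_zero_iff)
qed

definition cder :: "('a \<times> real) \<times> ('a \<times> real) \<Rightarrow> real" where "cder pq = k * inner (S_LS \<Lambda> \<Sigma> (fst (fst pq)) (fst (snd pq))) (vx (fst (fst pq)))"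

lemma dq_lim_same:
  assumes "fst (fst pq) = fst (snd pq)"
  shows "((\<lambda>t. (ch t pq - ch 0 pq) / t) \<longlongrightarrow> cder pq) (at 0)"
proof -
  have c0: "cder pq = 0" using assms by (simp add: cder_def S_LS_def)
  have ch0: "ch 0 pq = 1" using assms by (simp add: ch_def)
  have "((\<lambda>t. (ch t pq - ch 0 pq) / t) \<longlongrightarrow> 0) (at 0)"
  proof (rule Lim_null_comparison)
    show "\<forall>\<^sub>F t in at 0. norm ((ch t pq - ch 0 pq) / t) \<le> (k * BV)\<^sup>2 / 2 * \<bar>t\<bar>"
    proof (intro always_eventually allI)
      fix t :: real
      let ?y = "min (k * norm (t *\<^sub>R vx (fst (fst pq)))) pi"
      have cht: "ch t pq = cos ?y" using assms by (simp add: ch_def)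
      have y0: "0 \<le> ?y" using k_nonneg by simp
      have y1: "?y \<le> k * \<bar>t\<bar> * BV"
      proof -
        have "?y \<le> k * norm (t *\<^sub>R vx (fst (fst pq)))" by simp
        also have "\<dots> \<le> k * (\<bar>t\<bar> * BV)"
          using k_nonneg BV(2)[of "fst (fst pq)"] by (intro mult_left_mono) (auto intro: mult_left_mono)
        finally show ?thesis by (simp add: mult.assoc)
      qed
      have "?y\<^sup>2 \<le> (k * \<bar>t\<bar> * BV)\<^sup>2" using y0 y1 by (intro power_mono) auto
      then have "\<bar>ch t pq - ch 0 pq\<bar> \<le> (k * \<bar>t\<bar> * BV)\<^sup>2 / 2"
        using one_minus_cos[of ?y] unfolding cht ch0 by simp
      then have "\<bar>ch t pq - ch 0 pq\<bar> / \<bar>t\<bar> \<le> (k * \<bar>t\<bar> * BV)\<^sup>2 / 2 / \<bar>t\<bar>"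
        by (intro divide_right_mono) auto
      also have "\<dots> = (k * BV)\<^sup>2 / 2 * \<bar>t\<bar>"
        by (cases "t = 0") (simp_all add: power2_eq_square field_simps)
      finally show "norm ((ch t pq - ch 0 pq) / t) \<le> (k * BV)\<^sup>2 / 2 * \<bar>t\<bar>"
        by (simp add: abs_divide)
    qed
    have "((\<lambda>t::real. (k * BV)\<^sup>2 / 2 * \<bar>t\<bar>) \<longlongrightarrow> (k * BV)\<^sup>2 / 2 * \<bar>0\<bar>) (at 0)"
      by (intro tendsto_intros)
    then show "((\<lambda>t::real. (k * BV)\<^sup>2 / 2 * \<bar>t\<bar>) \<longlongrightarrow> 0) (at 0)" by simp
  qed
  then show ?thesis using c0 by simp
qed

lemma dq_lim_diff:
  assumes ne: "fst (fst pq) \<noteq> fst (snd pq)" and lt: "k * norm (fst (fst pq) - fst (snd pq)) < pi"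
  shows "((\<lambda>t. (ch t pq - ch 0 pq) / t) \<longlongrightarrow> cder pq) (at 0)"
proof -
  define w where "w = fst (fst pq) - fst (snd pq)"
  define u where "u = vx (fst (fst pq))"
  define F where "F t = cos (k * norm (w + t *\<^sub>R u))" for t
  have w0: "w \<noteq> 0" using ne by (simp add: w_def)
  have dn: "(norm has_derivative (\<lambda>h. inner h (sgn w))) (at (w + 0 *\<^sub>R u))"
    using has_derivative_norm[OF w0] by simp
  have da: "((\<lambda>t. w + t *\<^sub>R u) has_derivative (\<lambda>s. s *\<^sub>R u)) (at 0)"
    by (auto intro!: derivative_eq_intros)
  have "((\<lambda>t. norm (w + t *\<^sub>R u)) has_derivative (\<lambda>s. inner (s *\<^sub>R u) (sgn w))) (at 0)"
    using has_derivative_compose[OF da dn] .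
  moreover have "(\<lambda>s. inner (s *\<^sub>R u) (sgn w)) = (*) (inner u (sgn w))"
    by (auto simp: mult.commute)
  ultimately have d1: "((\<lambda>t. norm (w + t *\<^sub>R u)) has_real_derivative inner u (sgn w)) (at 0)"
    by (simp add: has_field_derivative_def)
  have dF: "(F has_real_derivative (- sin (k * norm (w + 0 *\<^sub>R u)) * (k * inner u (sgn w)))) (at 0)"
    unfolding F_def[abs_def] by (intro DERIV_fun_cos DERIV_cmult d1)
  then have lq: "((\<lambda>t. (F t - F 0) / (t - 0)) \<longlongrightarrow> - sin (k * norm w) * (k * inner u (sgn w))) (at 0)"
    by (simp add: has_field_derivative_iff)
  have ct: "((\<lambda>t. k * norm (w + t *\<^sub>R u)) \<longlongrightarrow> k * norm (w + 0 *\<^sub>R u)) (at 0)"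
    by (intro tendsto_intros)
  then have ev: "\<forall>\<^sub>F t in at 0. k * norm (w + t *\<^sub>R u) < pi"
    using lt by (intro order_tendstoD(2)) (auto simp: w_def)
  have chF: "ch t pq = F t" if "k * norm (w + t *\<^sub>R u) < pi" for t
    using that unfolding ch_alt F_def w_def u_def by simp
  have ch0: "ch 0 pq = F 0" using lt unfolding ch_alt F_def w_def by simp
  have evq: "\<forall>\<^sub>F t in at 0. (ch t pq - ch 0 pq) / t = (F t - F 0) / (t - 0)"
    using ev by eventually_elim (simp add: chF ch0)
  have l2: "((\<lambda>t. (ch t pq - ch 0 pq) / t) \<longlongrightarrow> - sin (k * norm w) * (k * inner u (sgn w))) (at 0)"
    by (subst tendsto_cong[OF evq]) (rule lq)
  have S: "S_LS \<Lambda> \<Sigma> (fst (fst pq)) (fst (snd pq)) = (sin (k * norm w) / norm w) *\<^sub>R (- w)"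
    using ne unfolding S_LS_def k_def[symmetric] w_def by simp
  have i1: "inner ((sin (k * norm w) / norm w) *\<^sub>R (- w)) u = - (sin (k * norm w) / norm w * inner w u)"
    by simp
  have i2: "inner u (sgn w) = inner w u / norm w"
    by (simp add: sgn_div_norm inner_commute divide_inverse)
  have "cder pq = k * (- (sin (k * norm w) / norm w * inner w u))"
    unfolding cder_def S using i1 by (simp add: u_def)
  also have "\<dots> = - sin (k * norm w) * (k * inner u (sgn w))"
    unfolding i2 by simp
  finally have "cder pq = - sin (k * norm w) * (k * inner u (sgn w))" .
  then show ?thesis using l2 by simp
qed

lemma dq_lim:
  assumes cs: "pq \<in> CS \<times> CS" and g0: "0 \<le> g 0 pq"
  shows "((\<lambda>t. snd (fst pq) * snd (snd pq) * ((ch t pq - ch 0 pq) / t)) \<longlongrightarrow> snd (fst pq) * snd (snd pq) * cder pq) (at 0)"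
proof (cases "snd (fst pq) * snd (snd pq) = 0")
  case True then show ?thesis unfolding True by simp
next
  case False
  obtain x1 r1 x2 r2 where pq: "pq = ((x1, r1), (x2, r2))" by (cases pq) auto
  have r: "0 < r1" "0 < r2" using False cs by (auto simp: pq CS_def cone_set_def)
  have "0 \<le> r1 * r2 * ch 0 pq" using g0 by (simp add: g_def pq)
  moreover have "0 < r1 * r2" using r by simp
  ultimately have c0: "0 \<le> ch 0 pq" by (auto simp: zero_le_mult_iff)
  have lt: "k * norm (x1 - x2) < pi"
  proof (rule ccontr)
    assume "\<not> k * norm (x1 - x2) < pi"
    then have "ch 0 pq = cos pi" by (simp add: ch_def pq)
    then show False using c0 by simp
  qed
  have "((\<lambda>t. (ch t pq - ch 0 pq) / t) \<longlongrightarrow> cder pq) (at 0)"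
  proof (cases "x1 = x2")
    case True then show ?thesis by (intro dq_lim_same) (simp add: pq)
  next
    case False then show ?thesis using lt by (intro dq_lim_diff) (simp_all add: pq)
  qed
  then show ?thesis by (intro tendsto_intros)
qed

lemma cos_c0: assumes "pq \<in> CS \<times> CS" "0 \<le> g 0 pq"
  shows "snd (fst pq) * snd (snd pq) * cos (k * norm (fst (fst pq) - fst (snd pq)))
       = snd (fst pq) * snd (snd pq) * ch 0 pq"
proof (cases "snd (fst pq) * snd (snd pq) = 0")
  case True then show ?thesis by simp
next
  case False
  obtain x1 r1 x2 r2 where pq: "pq = ((x1, r1), (x2, r2))" by (cases pq) auto
  have r: "0 < r1" "0 < r2" using False assms(1) by (auto simp: pq CS_def cone_set_def)
  have "0 \<le> r1 * r2 * ch 0 pq" using assms(2) by (simp add: g_def pq)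
  moreover have "0 < r1 * r2" using r by simp
  ultimately have c0: "0 \<le> ch 0 pq" by (auto simp: zero_le_mult_iff)
  have lt: "k * norm (x1 - x2) < pi"
  proof (rule ccontr)
    assume "\<not> k * norm (x1 - x2) < pi"
    then have "ch 0 pq = cos pi" by (simp add: ch_def pq)
    then show False using c0 by simp
  qed
  then show ?thesis by (simp add: ch_def pq)
qed

end

context HKP begin

lemma SL_meas: "(\<lambda>p::'a \<times> 'a. S_LS \<Lambda> \<Sigma> (fst p) (snd p)) \<in> borel_measurable borel"
proof -
  have e: "(\<lambda>p::'a \<times> 'a. S_LS \<Lambda> \<Sigma> (fst p) (snd p)) = (\<lambda>p. if p \<in> {p. fst p = snd p} then 0
      else (sin (k * norm (fst p - snd p)) / norm (fst p - snd p)) *\<^sub>R (snd p - fst p))"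
    by (auto simp: S_LS_def k_def)
  have c: "closed {p::'a \<times> 'a. fst p = snd p}"
    by (intro closed_Collect_eq continuous_intros)
  have m2: "(\<lambda>p::'a \<times> 'a. (sin (k * norm (fst p - snd p)) / norm (fst p - snd p)) *\<^sub>R (snd p - fst p)) \<in> borel_measurable borel"
    by (intro borel_measurable_continuous_onI borel_measurable_scaleR borel_measurable_divide
        continuous_intros) 
  show ?thesis unfolding e
    by (rule measurable_If_set) (use c m2 in auto)
qed

lemma cder_meas[measurable]: "cder \<in> borel_measurable borel"
proof -
  have e: "cder = (\<lambda>pq. k * inner ((\<lambda>p::'a \<times> 'a. S_LS \<Lambda> \<Sigma> (fst p) (snd p)) (fst (fst pq), fst (snd pq))) (vx (fst (fst pq))))"
    by (simp add: cder_def[abs_def])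
  have m: "(\<lambda>pq::('a \<times> real) \<times> ('a \<times> real). (fst (fst pq), fst (snd pq))) \<in> borel_measurable borel"
    by (intro borel_measurable_continuous_onI continuous_intros)
  have a: "(\<lambda>pq::('a \<times> real) \<times> ('a \<times> real). S_LS \<Lambda> \<Sigma> (fst (fst pq)) (fst (snd pq))) \<in> borel_measurable borel"
    using measurable_compose[OF m SL_meas] by simp
  have f2: "(\<lambda>pq::('a \<times> real) \<times> ('a \<times> real). fst (fst pq)) \<in> borel_measurable borel"
    by (intro borel_measurable_continuous_onI continuous_intros)
  have b: "(\<lambda>pq::('a \<times> real) \<times> ('a \<times> real). vx (fst (fst pq))) \<in> borel_measurable borel"
    using measurable_compose[OF f2 vx_meas] by simp
  show ?thesis unfolding cder_def[abs_def]
    by (intro borel_measurable_times borel_measurable_const borel_measurable_inner a b)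
qed

definition "qf t = (\<integral>pq. snd (fst pq) * snd (snd pq) * ((ch t pq - ch 0 pq) / t) \<partial>\<beta>0)"
definition "pf t = (\<integral>pq. snd (fst pq) * snd (snd pq) * Rx (fst (fst pq)) * ch t pq \<partial>\<beta>0)"

lemma int_w: "integrable \<beta>0 (\<lambda>pq. c * ((snd (fst pq))\<^sup>2 + (snd (snd pq))\<^sup>2))"
  using int_sq by simp

lemma qf_lim: "(qf \<longlongrightarrow> (\<integral>pq. snd (fst pq) * snd (snd pq) * cder pq \<partial>\<beta>0)) (at 0)"
  unfolding qf_def
proof (rule dc_at0[where w="\<lambda>pq. k * BV * ((snd (fst pq))\<^sup>2 + (snd (snd pq))\<^sup>2)"])
  show "(\<lambda>pq. snd (fst pq) * snd (snd pq) * cder pq) \<in> borel_measurable \<beta>0" by measurable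
  show "(\<lambda>pq. snd (fst pq) * snd (snd pq) * ((ch t pq - ch 0 pq) / t)) \<in> borel_measurable \<beta>0" for t
    by measurable
  show "integrable \<beta>0 (\<lambda>pq. k * BV * ((snd (fst pq))\<^sup>2 + (snd (snd pq))\<^sup>2))" by (rule int_w)
  show "AE pq in \<beta>0. ((\<lambda>t. snd (fst pq) * snd (snd pq) * ((ch t pq - ch 0 pq) / t)) \<longlongrightarrow> snd (fst pq) * snd (snd pq) * cder pq) (at 0)"
    using AE_CS g0_nonneg by eventually_elim (rule dq_lim)
  show "AE pq in \<beta>0. norm (snd (fst pq) * snd (snd pq) * ((ch t pq - ch 0 pq) / t)) \<le> k * BV * ((snd (fst pq))\<^sup>2 + (snd (snd pq))\<^sup>2)" for t
  proof (rule AE_I2)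
    fix pq :: "('a \<times> real) \<times> ('a \<times> real)"
    have q: "\<bar>(ch t pq - ch 0 pq) / t\<bar> \<le> k * BV"
    proof (cases "t = 0")
      case True then show ?thesis using k_nonneg BV(1) by simp
    next
      case False
      have "\<bar>ch t pq - ch 0 pq\<bar> \<le> k * BV * \<bar>t\<bar>" using ch_lip[of t pq] by (simp add: algebra_simps)
      then show ?thesis using False by (simp add: abs_divide divide_le_eq)
    qed
    have "\<bar>snd (fst pq) * snd (snd pq) * ((ch t pq - ch 0 pq) / t)\<bar>
        = \<bar>snd (fst pq) * snd (snd pq)\<bar> * \<bar>(ch t pq - ch 0 pq) / t\<bar>" by (simp add: abs_mult)
    also have "\<dots> \<le> ((snd (fst pq))\<^sup>2 + (snd (snd pq))\<^sup>2) * (k * BV)"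
      by (intro mult_mono r12_le q) auto
    finally show "norm (snd (fst pq) * snd (snd pq) * ((ch t pq - ch 0 pq) / t)) \<le> k * BV * ((snd (fst pq))\<^sup>2 + (snd (snd pq))\<^sup>2)"
      by (simp add: mult.commute)
  qed
qed

lemma pf_lim: "(pf \<longlongrightarrow> pf 0) (at 0)"
  unfolding pf_def
proof (rule dc_at0[where w="\<lambda>pq. BR * ((snd (fst pq))\<^sup>2 + (snd (snd pq))\<^sup>2)"])
  show "(\<lambda>pq. snd (fst pq) * snd (snd pq) * Rx (fst (fst pq)) * ch 0 pq) \<in> borel_measurable \<beta>0" by measurable
  show "(\<lambda>pq. snd (fst pq) * snd (snd pq) * Rx (fst (fst pq)) * ch t pq) \<in> borel_measurable \<beta>0" for t
    by measurable
  show "integrable \<beta>0 (\<lambda>pq. BR * ((snd (fst pq))\<^sup>2 + (snd (snd pq))\<^sup>2))" by (rule int_w)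
  show "AE pq in \<beta>0. ((\<lambda>t. snd (fst pq) * snd (snd pq) * Rx (fst (fst pq)) * ch t pq) \<longlongrightarrow> snd (fst pq) * snd (snd pq) * Rx (fst (fst pq)) * ch 0 pq) (at 0)"
    by (intro AE_I2 tendsto_intros ch_cont)
  show "AE pq in \<beta>0. norm (snd (fst pq) * snd (snd pq) * Rx (fst (fst pq)) * ch t pq) \<le> BR * ((snd (fst pq))\<^sup>2 + (snd (snd pq))\<^sup>2)" for t
  proof (rule AE_I2)
    fix pq :: "('a \<times> real) \<times> ('a \<times> real)"
    have "\<bar>snd (fst pq) * snd (snd pq) * Rx (fst (fst pq)) * ch t pq\<bar>
        = \<bar>snd (fst pq) * snd (snd pq)\<bar> * \<bar>Rx (fst (fst pq))\<bar> * \<bar>ch t pq\<bar>" by (simp add: abs_mult)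
    also have "\<dots> \<le> ((snd (fst pq))\<^sup>2 + (snd (snd pq))\<^sup>2) * BR * 1"
      by (intro mult_mono r12_le BR(2) ch_bd) (auto intro: mult_nonneg_nonneg simp: BR(1))
    finally show "norm (snd (fst pq) * snd (snd pq) * Rx (fst (fst pq)) * ch t pq) \<le> BR * ((snd (fst pq))\<^sup>2 + (snd (snd pq))\<^sup>2)"
      by (simp add: mult.commute)
  qed
qed

end

context HKP begin

definition "m0 = (\<integral>x. indicator X x \<partial>\<nu>0)"
definition "IR = (\<integral>x. indicator X x * Rx x \<partial>\<nu>0)"
definition "IR2 = (\<integral>x. indicator X x * (Rx x)\<^sup>2 \<partial>\<nu>0)"
definition "Qf t = 4 / \<Sigma> * (2 * IR + t * IR2) - 8 / \<Sigma> * (qf t + pf t)"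
definition "Dv = 8 / \<Sigma> * IR - 8 / \<Sigma> * ((\<integral>pq. snd (fst pq) * snd (snd pq) * cder pq \<partial>\<beta>0) + pf 0)"

lemma int_nu0: fixes f :: "'a \<Rightarrow> real" and B :: real assumes [measurable]: "f \<in> borel_measurable borel" and b: "\<And>x. \<bar>f x\<bar> \<le> B"
  shows "integrable \<nu>0 f"
proof -
  interpret F: finite_measure \<nu>0 by (rule fin_nu0)
  show ?thesis by (rule F.integrable_const_bound[where B=B]) (use b in \<open>auto simp: measurable_cong_sets[OF sets_nu0 refl]\<close>)
qed

lemma mnu_exp: "mnu h = m0 + 2 * h * IR + h\<^sup>2 * IR2"
proof -
  have i1: "integrable \<nu>0 (\<lambda>x. indicator X x :: real)" by (rule int_nu0[where B=1]) auto
  have i2: "integrable \<nu>0 (\<lambda>x. indicator X x * Rx x)"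
    by (rule int_nu0[where B=BR]) (use BR in \<open>auto simp: indicator_def\<close>)
  have i3: "integrable \<nu>0 (\<lambda>x. indicator X x * (Rx x)\<^sup>2)"
  proof (rule int_nu0[where B="BR\<^sup>2"])
    fix x show "\<bar>indicator X x * (Rx x)\<^sup>2\<bar> \<le> BR\<^sup>2"
      using BR(2)[of x] abs_le_square_iff[of "Rx x" BR] BR(1) by (auto simp: indicator_def)
  qed auto
  have "mnu h = (\<integral>x. indicator X x + 2 * h * (indicator X x * Rx x) + h\<^sup>2 * (indicator X x * (Rx x)\<^sup>2) \<partial>\<nu>0)"
    unfolding mnu_def by (intro Bochner_Integration.integral_cong) (auto simp: power2_eq_square algebra_simps)
  also have "\<dots> = m0 + 2 * h * IR + h\<^sup>2 * IR2"
    using i1 i2 i3 by (simp add: m0_def IR_def IR2_def)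
  finally show ?thesis .
qed

lemma int_ch: "integrable \<beta>0 (\<lambda>pq. snd (fst pq) * snd (snd pq) * ch t pq)"
proof (rule int_by[where c=1])
  fix pq :: "('a \<times> real) \<times> ('a \<times> real)"
  have "\<bar>snd (fst pq) * snd (snd pq) * ch t pq\<bar> = \<bar>snd (fst pq) * snd (snd pq)\<bar> * \<bar>ch t pq\<bar>" by (simp add: abs_mult)
  also have "\<dots> \<le> ((snd (fst pq))\<^sup>2 + (snd (snd pq))\<^sup>2) * 1"
    by (intro mult_mono r12_le ch_bd) auto
  finally show "\<bar>snd (fst pq) * snd (snd pq) * ch t pq\<bar> \<le> 1 * ((snd (fst pq))\<^sup>2 + (snd (snd pq))\<^sup>2)" by simp
qed measurable

lemma int_chR: "integrable \<beta>0 (\<lambda>pq. snd (fst pq) * snd (snd pq) * Rx (fst (fst pq)) * ch t pq)"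
proof (rule int_by[where c=BR])
  fix pq :: "('a \<times> real) \<times> ('a \<times> real)"
  have "\<bar>snd (fst pq) * snd (snd pq) * Rx (fst (fst pq)) * ch t pq\<bar>
      = \<bar>snd (fst pq) * snd (snd pq)\<bar> * \<bar>Rx (fst (fst pq))\<bar> * \<bar>ch t pq\<bar>" by (simp add: abs_mult)
  also have "\<dots> \<le> ((snd (fst pq))\<^sup>2 + (snd (snd pq))\<^sup>2) * BR * 1"
    by (intro mult_mono r12_le BR(2) ch_bd) (auto intro: mult_nonneg_nonneg simp: BR(1))
  finally show "\<bar>snd (fst pq) * snd (snd pq) * Rx (fst (fst pq)) * ch t pq\<bar> \<le> BR * ((snd (fst pq))\<^sup>2 + (snd (snd pq))\<^sup>2)"
    by (simp add: mult.commute)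
qed measurable

lemma cost_diff: assumes "h \<noteq> 0" shows "Cost h UNIV - Cost 0 UNIV = h * Qf h"
proof -
  let ?A = "\<lambda>t. \<integral>pq. snd (fst pq) * snd (snd pq) * ch t pq \<partial>\<beta>0"
  have gh: "(\<integral>pq. indicator UNIV pq * g h pq \<partial>\<beta>0) = ?A h + h * pf h"
  proof -
    have "(\<integral>pq. indicator UNIV pq * g h pq \<partial>\<beta>0)
        = (\<integral>pq. snd (fst pq) * snd (snd pq) * ch h pq + h * (snd (fst pq) * snd (snd pq) * Rx (fst (fst pq)) * ch h pq) \<partial>\<beta>0)"
      by (intro Bochner_Integration.integral_cong) (auto simp: g_def algebra_simps)
    also have "\<dots> = ?A h + h * pf h" using int_ch int_chR by (simp add: pf_def)
    finally show ?thesis .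
  qed
  have g0: "(\<integral>pq. indicator UNIV pq * g 0 pq \<partial>\<beta>0) = ?A 0"
    by (intro Bochner_Integration.integral_cong) (auto simp: g_def)
  have q: "h * qf h = ?A h - ?A 0"
  proof -
    have "h * qf h = (\<integral>pq. h * (snd (fst pq) * snd (snd pq) * ((ch h pq - ch 0 pq) / h)) \<partial>\<beta>0)"
      unfolding qf_def by (rule integral_mult_right_zero[symmetric])
    also have "\<dots> = (\<integral>pq. snd (fst pq) * snd (snd pq) * ch h pq - snd (fst pq) * snd (snd pq) * ch 0 pq \<partial>\<beta>0)"
      using assms by (intro Bochner_Integration.integral_cong) (auto simp: field_simps)
    also have "\<dots> = ?A h - ?A 0" using int_ch by simp
    finally show ?thesis .
  qed
  have q': "?A h = ?A 0 + h * qf h" using q by simp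
  show ?thesis unfolding Cost_def gh g0 mnu_exp Qf_def q'
    using Spos by (simp add: field_simps power2_eq_square)
qed

lemma Qf_lim: "(Qf \<longlongrightarrow> Dv) (at 0)"
proof -
  have "(Qf \<longlongrightarrow> 4 / \<Sigma> * (2 * IR + 0 * IR2) - 8 / \<Sigma> * ((\<integral>pq. snd (fst pq) * snd (snd pq) * cder pq \<partial>\<beta>0) + pf 0)) (at 0)"
    unfolding Qf_def[abs_def] by (intro tendsto_intros qf_lim pf_lim)
  then show ?thesis by (simp add: Dv_def)
qed

end

context HKP begin

lemma S_norm: "norm (S_LS \<Lambda> \<Sigma> x1 x2) \<le> 1"
proof (cases "x1 = x2")
  case True then show ?thesis by (simp add: S_LS_def)
next
  case False
  then have "norm (S_LS \<Lambda> \<Sigma> x1 x2) = \<bar>sin (sqrt (\<Sigma> / (4 * \<Lambda>)) * norm (x1 - x2))\<bar>"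
    by (simp add: S_LS_def norm_minus_commute)
  then show ?thesis by simp
qed

lemma cder_bd: "\<bar>cder pq\<bar> \<le> k * BV"
proof -
  have "\<bar>inner (S_LS \<Lambda> \<Sigma> (fst (fst pq)) (fst (snd pq))) (vx (fst (fst pq)))\<bar>
      \<le> norm (S_LS \<Lambda> \<Sigma> (fst (fst pq)) (fst (snd pq))) * norm (vx (fst (fst pq)))"
    by (rule Cauchy_Schwarz_ineq2)
  also have "\<dots> \<le> 1 * BV" by (intro mult_mono S_norm BV(2)) auto
  finally show ?thesis unfolding cder_def using k_nonneg by (simp add: abs_mult mult_left_mono)
qed

lemma int_cder: "integrable \<beta>0 (\<lambda>pq. snd (fst pq) * snd (snd pq) * cder pq)"
proof (rule int_by[where c="k * BV"])
  fix pq :: "('a \<times> real) \<times> ('a \<times> real)"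
  have "\<bar>snd (fst pq) * snd (snd pq) * cder pq\<bar> = \<bar>snd (fst pq) * snd (snd pq)\<bar> * \<bar>cder pq\<bar>" by (simp add: abs_mult)
  also have "\<dots> \<le> ((snd (fst pq))\<^sup>2 + (snd (snd pq))\<^sup>2) * (k * BV)"
    by (intro mult_mono r12_le cder_bd) auto
  finally show "\<bar>snd (fst pq) * snd (snd pq) * cder pq\<bar> \<le> k * BV * ((snd (fst pq))\<^sup>2 + (snd (snd pq))\<^sup>2)"
    by (simp add: mult.commute)
qed measurable

lemma int_r1R: "integrable \<beta>0 (\<lambda>pq. (snd (fst pq))\<^sup>2 * Rx (fst (fst pq)))"
proof (rule int_by[where c=BR])
  fix pq :: "('a \<times> real) \<times> ('a \<times> real)"
  have "\<bar>(snd (fst pq))\<^sup>2 * Rx (fst (fst pq))\<bar> = (snd (fst pq))\<^sup>2 * \<bar>Rx (fst (fst pq))\<bar>" by (simp add: abs_mult)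
  also have "\<dots> \<le> ((snd (fst pq))\<^sup>2 + (snd (snd pq))\<^sup>2) * BR"
    by (intro mult_mono BR(2)) (auto simp: BR(1))
  finally show "\<bar>(snd (fst pq))\<^sup>2 * Rx (fst (fst pq))\<bar> \<le> BR * ((snd (fst pq))\<^sup>2 + (snd (snd pq))\<^sup>2)"
    by (simp add: mult.commute)
qed measurable

lemma IR_eq: "(\<integral>x \<in> X. R x \<partial>\<nu>0) = IR"
  unfolding set_lebesgue_integral_def IR_def
  by (intro Bochner_Integration.integral_cong) (auto simp: Rx_def indicator_def)

lemma H1_eq: "(\<integral>x \<in> X. R x \<partial>hmarg (marg1 \<beta>0)) = (\<integral>pq. (snd (fst pq))\<^sup>2 * Rx (fst (fst pq)) \<partial>\<beta>0)"
proof -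
  have s1: "sets (marg1 \<beta>0) = sets borel" by simp
  have "(\<integral>x \<in> X. R x \<partial>hmarg (marg1 \<beta>0)) = (\<integral>x. Rx x \<partial>hmarg (marg1 \<beta>0))"
    unfolding set_lebesgue_integral_def
    by (intro Bochner_Integration.integral_cong) (auto simp: Rx_def indicator_def)
  also have "\<dots> = (\<integral>p. Rx (fst p) \<partial>density (marg1 \<beta>0) (\<lambda>p. ennreal ((snd p)\<^sup>2)))"
    unfolding hmarg_def
    by (rule integral_distr) (simp_all add: measurable_cong_sets[OF sets_density refl] measurable_cong_sets[OF s1 refl])
  also have "\<dots> = (\<integral>p. (snd p)\<^sup>2 *\<^sub>R Rx (fst p) \<partial>marg1 \<beta>0)"
    by (rule integral_density) (simp_all add: measurable_cong_sets[OF s1 refl])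
  also have "\<dots> = (\<integral>pq. (snd (fst pq))\<^sup>2 * Rx (fst (fst pq)) \<partial>\<beta>0)"
    unfolding marg1_b0 by (subst integral_distr) simp_all
  finally show ?thesis .
qed

lemma frakF_eq: "frakF \<Lambda> \<Sigma> X xbar \<beta>0 v R
   = 4 / \<Sigma> * (\<integral>pq. - ((snd (fst pq))\<^sup>2 * Rx (fst (fst pq))) + snd (fst pq) * snd (snd pq) * Rx (fst (fst pq)) * ch 0 pq
        + snd (fst pq) * snd (snd pq) * cder pq \<partial>\<beta>0)"
proof -
  have "(\<integral>pq \<in> cone_set X xbar \<times> cone_set X xbar.
        (let x1 = fst (fst pq); r1 = snd (fst pq); x2 = fst (snd pq); r2 = snd (snd pq);
             k = sqrt (\<Sigma> / (4 * \<Lambda>))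
         in - r1\<^sup>2 * R x1 + r1 * r2 * R x1 * cos (k * norm (x1 - x2))
            + r1 * r2 * k * inner (S_LS \<Lambda> \<Sigma> x1 x2) (v x1)) \<partial>\<beta>0)
     = (\<integral>pq. - ((snd (fst pq))\<^sup>2 * Rx (fst (fst pq))) + snd (fst pq) * snd (snd pq) * Rx (fst (fst pq)) * ch 0 pq
        + snd (fst pq) * snd (snd pq) * cder pq \<partial>\<beta>0)"
    unfolding set_lebesgue_integral_def
  proof (rule integral_cong_AE)
    show "(\<lambda>pq. - ((snd (fst pq))\<^sup>2 * Rx (fst (fst pq))) + snd (fst pq) * snd (snd pq) * Rx (fst (fst pq)) * ch 0 pq
        + snd (fst pq) * snd (snd pq) * cder pq) \<in> borel_measurable \<beta>0" by measurable
    have e: "indicator (cone_set X xbar \<times> cone_set X xbar) pq *\<^sub>R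
        (let x1 = fst (fst pq); r1 = snd (fst pq); x2 = fst (snd pq); r2 = snd (snd pq);
             k = sqrt (\<Sigma> / (4 * \<Lambda>))
         in - r1\<^sup>2 * R x1 + r1 * r2 * R x1 * cos (k * norm (x1 - x2))
            + r1 * r2 * k * inner (S_LS \<Lambda> \<Sigma> x1 x2) (v x1))
      = indicator (CS \<times> CS) pq * (- ((snd (fst pq))\<^sup>2 * Rx (fst (fst pq))) + snd (fst pq) * snd (snd pq) * Rx (fst (fst pq)) * cos (k * norm (fst (fst pq) - fst (snd pq)))
        + snd (fst pq) * snd (snd pq) * cder pq)" for pq
    proof (cases "pq \<in> CS \<times> CS")
      case True
      have x1: "fst (fst pq) \<in> X" using True xbarX by (auto simp: CS_def cone_set_def)
      show ?thesis using True x1 unfolding Let_def k_def[symmetric]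
        by (simp add: CS_def cder_def vx_def Rx_def algebra_simps)
    next
      case False then show ?thesis by (simp add: CS_def)
    qed
    show "(\<lambda>pq. indicator (cone_set X xbar \<times> cone_set X xbar) pq *\<^sub>R
        (let x1 = fst (fst pq); r1 = snd (fst pq); x2 = fst (snd pq); r2 = snd (snd pq);
             k = sqrt (\<Sigma> / (4 * \<Lambda>))
         in - r1\<^sup>2 * R x1 + r1 * r2 * R x1 * cos (k * norm (x1 - x2))
            + r1 * r2 * k * inner (S_LS \<Lambda> \<Sigma> x1 x2) (v x1))) \<in> borel_measurable \<beta>0"
      unfolding e by measurable
    show "AE pq in \<beta>0. indicator (cone_set X xbar \<times> cone_set X xbar) pq *\<^sub>R
        (let x1 = fst (fst pq); r1 = snd (fst pq); x2 = fst (snd pq); r2 = snd (snd pq);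
             k = sqrt (\<Sigma> / (4 * \<Lambda>))
         in - r1\<^sup>2 * R x1 + r1 * r2 * R x1 * cos (k * norm (x1 - x2))
            + r1 * r2 * k * inner (S_LS \<Lambda> \<Sigma> x1 x2) (v x1))
      = - ((snd (fst pq))\<^sup>2 * Rx (fst (fst pq))) + snd (fst pq) * snd (snd pq) * Rx (fst (fst pq)) * ch 0 pq
        + snd (fst pq) * snd (snd pq) * cder pq"
      using AE_CS g0_nonneg
    proof eventually_elim
      case (elim pq)
      have x1: "fst (fst pq) \<in> X" using elim(1) xbarX by (auto simp: CS_def cone_set_def)
      have c: "snd (fst pq) * snd (snd pq) * cos (k * norm (fst (fst pq) - fst (snd pq)))
           = snd (fst pq) * snd (snd pq) * ch 0 pq" by (rule cos_c0[OF elim])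
      have c2: "snd (fst pq) * snd (snd pq) * R (fst (fst pq)) * cos (k * norm (fst (fst pq) - fst (snd pq)))
           = snd (fst pq) * snd (snd pq) * Rx (fst (fst pq)) * ch 0 pq"
      proof -
        have "snd (fst pq) * snd (snd pq) * R (fst (fst pq)) * cos (k * norm (fst (fst pq) - fst (snd pq)))
            = R (fst (fst pq)) * (snd (fst pq) * snd (snd pq) * cos (k * norm (fst (fst pq) - fst (snd pq))))"
          by (simp add: algebra_simps)
        also have "\<dots> = R (fst (fst pq)) * (snd (fst pq) * snd (snd pq) * ch 0 pq)" by (simp only: c)
        finally show ?thesis using x1 by (simp add: Rx_def algebra_simps)
      qed
      have ind: "pq \<in> cone_set X xbar \<times> cone_set X xbar" using elim(1) by (simp add: CS_def)
      show ?case using ind c2 x1 unfolding Let_def k_def[symmetric]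
        by (simp add: cder_def vx_def Rx_def algebra_simps)
    qed
  qed measurable
  then show ?thesis unfolding frakF_def by simp
qed

end

context HKP begin

lemma zeta_eq: "frakF \<Lambda> \<Sigma> X xbar \<beta>0 v R
        - (4 / \<Sigma>) * ((\<integral>x \<in> X. R x \<partial>\<nu>0) - (\<integral>x \<in> X. R x \<partial>(hmarg (marg1 \<beta>0)))) = - (Dv / 2)"
proof -
  let ?H = "\<integral>pq. (snd (fst pq))\<^sup>2 * Rx (fst (fst pq)) \<partial>\<beta>0"
  let ?C = "\<integral>pq. snd (fst pq) * snd (snd pq) * cder pq \<partial>\<beta>0"
  have "(\<integral>pq. - ((snd (fst pq))\<^sup>2 * Rx (fst (fst pq))) + snd (fst pq) * snd (snd pq) * Rx (fst (fst pq)) * ch 0 pq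
        + snd (fst pq) * snd (snd pq) * cder pq \<partial>\<beta>0) = - ?H + pf 0 + ?C"
    using int_r1R int_chR[of 0] int_cder by (simp add: pf_def)
  then have "frakF \<Lambda> \<Sigma> X xbar \<beta>0 v R = 4 / \<Sigma> * (- ?H + pf 0 + ?C)" by (simp add: frakF_eq)
  then show ?thesis unfolding IR_eq H1_eq Dv_def using Spos by (simp add: field_simps)
qed

lemma main:
  "frechet_subdiff0 (\<lambda>h. - (1/2) * HK2 \<Lambda> \<Sigma> X xbar (\<nu> h) \<mu>) \<noteq> {}
    \<and> frakF \<Lambda> \<Sigma> X xbar \<beta>0 v R
        - (4 / \<Sigma>) * ((\<integral>x \<in> X. R x \<partial>\<nu>0) - (\<integral>x \<in> X. R x \<partial>(hmarg (marg1 \<beta>0))))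
      \<in> frechet_subdiff0 (\<lambda>h. - (1/2) * HK2 \<Lambda> \<Sigma> X xbar (\<nu> h) \<mu>)"
proof -
  define f where "f h = - (1/2) * HK2 \<Lambda> \<Sigma> X xbar (\<nu> h) \<mu>" for h
  define \<zeta> where "\<zeta> = - (Dv / 2)"
  define L where "L h = - (1/2) * \<bar>Qf h - Dv\<bar>" for h
  have ev: "\<forall>\<^sub>F h in at 0. h \<in> interior N - {0}"
    by (rule eventually_at_in_open) (use N0 in auto)
  have le: "\<forall>\<^sub>F h in at (0::real). ereal (L h) \<le> ereal ((f h - f 0 - \<zeta> * h) / \<bar>h\<bar>)"
    using ev
  proof eventually_elim
    case (elim h)
    then have h: "h \<in> N" "h \<noteq> 0" using interior_subset by auto
    have A: "HK2 \<Lambda> \<Sigma> X xbar (\<nu> h) \<mu> \<le> Cost h UNIV" by (rule HK2_le[OF h(1)])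
    have B: "Cost 0 UNIV \<le> HK2 \<Lambda> \<Sigma> X xbar (\<nu> 0) \<mu>" by (rule HK2_ge)
    have "f h - f 0 - \<zeta> * h \<ge> - (1/2) * (Cost h UNIV - Cost 0 UNIV) - \<zeta> * h"
    proof -
      have d: "HK2 \<Lambda> \<Sigma> X xbar (\<nu> h) \<mu> - HK2 \<Lambda> \<Sigma> X xbar (\<nu> 0) \<mu> \<le> Cost h UNIV - Cost 0 UNIV"
        using A B by linarith
      have "f h - f 0 = - (1/2) * (HK2 \<Lambda> \<Sigma> X xbar (\<nu> h) \<mu> - HK2 \<Lambda> \<Sigma> X xbar (\<nu> 0) \<mu>)"
        unfolding f_def by (simp add: algebra_simps)
      also have "\<dots> \<ge> - (1/2) * (Cost h UNIV - Cost 0 UNIV)"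
        using d by simp
      finally show ?thesis by simp
    qed
    also have "- (1/2) * (Cost h UNIV - Cost 0 UNIV) - \<zeta> * h = - (1/2) * h * (Qf h - Dv)"
      unfolding cost_diff[OF h(2)] \<zeta>_def by (simp add: algebra_simps)
    finally have a: "- (1/2) * h * (Qf h - Dv) \<le> f h - f 0 - \<zeta> * h" .
    have habs: "\<bar>h\<bar> > 0" using h(2) by simp
    have "L h * \<bar>h\<bar> \<le> - (1/2) * h * (Qf h - Dv)"
    proof -
      have "\<bar>h * (Qf h - Dv)\<bar> = \<bar>h\<bar> * \<bar>Qf h - Dv\<bar>" by (simp add: abs_mult)
      moreover have "h * (Qf h - Dv) \<le> \<bar>h * (Qf h - Dv)\<bar>" by simp
      ultimately show ?thesis unfolding L_def by (simp add: algebra_simps)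
    qed
    then have "L h * \<bar>h\<bar> \<le> f h - f 0 - \<zeta> * h" using a by linarith
    then have "L h \<le> (f h - f 0 - \<zeta> * h) / \<bar>h\<bar>" using habs by (simp add: le_divide_eq)
    then show ?case by simp
  qed
  have "((\<lambda>h. ereal (L h)) \<longlongrightarrow> ereal (- (1/2) * \<bar>Dv - Dv\<bar>)) (at 0)"
    unfolding L_def by (intro tendsto_intros Qf_lim)
  then have "Liminf (at (0::real)) (\<lambda>h. ereal (L h)) = 0"
    by (intro lim_imp_Liminf) (simp_all add: trivial_limit_at zero_ereal_def)
  moreover have "Liminf (at (0::real)) (\<lambda>h. ereal (L h)) \<le> Liminf (at 0) (\<lambda>h. ereal ((f h - f 0 - \<zeta> * h) / \<bar>h\<bar>))"
    by (rule Liminf_mono[OF le])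
  ultimately have "\<zeta> \<in> frechet_subdiff0 f" unfolding frechet_subdiff0_def by simp
  moreover have "\<zeta> = frakF \<Lambda> \<Sigma> X xbar \<beta>0 v R
        - (4 / \<Sigma>) * ((\<integral>x \<in> X. R x \<partial>\<nu>0) - (\<integral>x \<in> X. R x \<partial>(hmarg (marg1 \<beta>0))))"
    unfolding \<zeta>_def zeta_eq ..
  ultimately show ?thesis unfolding f_def[abs_def] by auto
qed

end

theorem proposition2p3:
  fixes X :: "'a::{real_inner, polish_space} set"
    and xbar :: 'a
    and \<Lambda> \<Sigma> :: real
    and v :: "'a \<Rightarrow> 'a" and R :: "'a \<Rightarrow> real"
    and N :: "real set"
    and \<nu>0 \<mu> :: "'a measure" and \<nu> :: "real \<Rightarrow> 'a measure"
    and \<beta>0 :: "(('a \<times> real) \<times> ('a \<times> real)) measure"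
  assumes "closed X" and "convex X" and "xbar \<in> X"
    and "\<Lambda> > 0" and "\<Sigma> > 0"
    and "v \<in> borel_measurable (restrict_space borel X)" and "bounded (v ` X)"
    and "R \<in> borel_measurable (restrict_space borel X)" and "bounded (R ` X)"
    and "0 \<in> interior N"
    and "\<And>h x. h \<in> N \<Longrightarrow> x \<in> X \<Longrightarrow> x + h *\<^sub>R v x \<in> X \<and> 1 + h * R x > 0"
    and "meas_on X \<nu>0"
    and "\<And>h. h \<in> N \<Longrightarrow> meas_on X (\<nu> h)"
    and "\<And>h \<phi>. h \<in> N \<Longrightarrow> continuous_on X \<phi> \<Longrightarrow> bounded (\<phi> ` X) \<Longrightarrow>
           (\<integral>x \<in> X. (\<phi> x :: real) \<partial>(\<nu> h))
             = (\<integral>x \<in> X. \<phi> (x + h *\<^sub>R v x) * (1 + h * R x)\<^sup>2 \<partial>\<nu>0)"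
    and "meas_on X \<mu>"
    and "HK_optimal \<Lambda> \<Sigma> X xbar \<nu>0 \<mu> \<beta>0"
  shows "frechet_subdiff0 (\<lambda>h. - (1/2) * HK2 \<Lambda> \<Sigma> X xbar (\<nu> h) \<mu>) \<noteq> {}
    \<and> frakF \<Lambda> \<Sigma> X xbar \<beta>0 v R
        - (4 / \<Sigma>) * ((\<integral>x \<in> X. R x \<partial>\<nu>0) - (\<integral>x \<in> X. R x \<partial>(hmarg (marg1 \<beta>0))))
      \<in> frechet_subdiff0 (\<lambda>h. - (1/2) * HK2 \<Lambda> \<Sigma> X xbar (\<nu> h) \<mu>)"
proof -
  interpret HKP X xbar \<Lambda> \<Sigma> v R N \<nu>0 \<mu> \<nu> \<beta>0
    by (rule HKP.intro) (fact assms)+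
  show ?thesis by (rule main)
qed

end
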